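(* Let $d\ge1$, $0<c\le\infty$, $X=(0,c)$, $X_{\mathrm{SYM}}=(-c,0)\cup(0,c)$, $\mathbb{X}=(X_{\mathrm{SYM}})^d$. For $i=1,\dots,d$ let $w_i\in C^2(X)$ be strictly positive, $p_i\in C^2(X)$ real-valued and nonvanishing, $q_i\in C^1(X)$ real-valued, $a_i\ge0$ constants, $A=\sum_ia_i$, $\mu_i(dx)=w_i(x)dx$ on $X$, $\delta_i=p_i\frac{d}{dx}+q_i$, $\delta_i^*=-p_i\frac{d}{dx}+q_i-p_i\frac{w_i'}{w_i}-p_i'$, $L_i=a_i+\delta_i^*\delta_i$. Assume for each $i$ there is an orthonormal basis $\{\varphi^{(i)}_k:k\in\mathbb{N}\}$ of $L^2(X,\mu_i)$ with $\varphi^{(i)}_k\in C^\infty(X)$, $L_i\varphi^{(i)}_k=\lambda^{(i)}_k\varphi^{(i)}_k$, $\lambda^{(i)}_0<\lambda^{(i)}_1<\dots\to\infty$, $\delta_i\varphi^{(i)}_k\in L^2(X,\mu_i)$ and $\langle\delta_i\varphi^{(i)}_k,\delta_i\varphi^{(i)}_m\rangle_{\mu_i}=\langle\delta_i^*\delta_i\varphi^{(i)}_k,\varphi^{(i)}_m\rangle_{\mu_i}$ for all $k,m$; assume moreover $a_i=\lambda^{(i)}_0$ for every $i$. Extend $w_i,p_i,\varphi^{(i)}_k$ evenly and $q_i$ oddly to $X_{\mathrm{SYM}}$, let $\mu(dx)=w_1(x_1)\cdots w_d(x_d)dx$ on $\mathbb{X}$, define $\Phi^{(i)}_n=\frac1{\sqrt2}\varphi^{(i)}_{n/2}$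 for even $n$, $\Phi^{(i)}_n=-\frac1{\sqrt2}(\lambda^{(i)}_{(n+1)/2}-a_i)^{-1/2}\delta_i\varphi^{(i)}_{(n+1)/2}$ for odd $n$, $\Phi_n=\Phi^{(1)}_{n_1}\otimes\cdots\otimes\Phi^{(d)}_{n_d}$ and $\lambda_{\langle n\rangle}=\sum_{i=1}^d\lambda^{(i)}_{\lfloor(n_i+1)/2\rfloor}$ for $n\in\mathbb{N}^d$. Let $$D_jf(x)=p_j(x_j)\partial_{x_j}f(x)+q_j(x_j)\tfrac{f(x)+f(\sigma_jx)}{2}+\Big[p_j(x_j)\tfrac{w_j'(x_j)}{w_j(x_j)}+p_j'(x_j)-q_j(x_j)\Big]\tfrac{f(x)-f(\sigma_jx)}{2},\qquad\mathbb{L}=A-\sum_{i=1}^dD_i^2,$$ ($\sigma_j$ the reflection changing the sign of the $j$th coordinate). Let $\mathfrak{L}f=\sum_{n}\lambda_{\langle n\rangle}\langle f,\Phi_n\rangle_\mu\Phi_n$ with domain $\{f\in L^2(\mathbb{X},\mu):\sum_n|\lambda_{\langle n\rangle}\langle f,\Phi_n\rangle_\mu|^2<\infty\}$ (a nonnegative self-adjoint operator), let $\Pi_0$ be the orthogonal projection onto the closed span of $\{\Phi_n:\lambda_{\langle n\rangle}\neq0\}$, $\mathfrak{L}^{-1}\Pi_0f=\sum_{\lambda_{\langle n\rangle}\neq0}\lambda_{\langle n\rangle}^{-1}\langle f,\Phi_n\rangle_\mu\Phi_n$, $P_t=\exp(-t\mathfrak{L}^{1/2})$ ($t\ge0$,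 spectral calculus), $R_jf=\sum_{\lambda_{\langle n\rangle}\neq0}\lambda_{\langle n\rangle}^{-1/2}\langle f,\Phi_n\rangle_\mu D_j\Phi_n$ and $U^j_tf=P_tR_jf$. Let $f$ belong to the linear span of $\{\Phi_n:n\in\mathbb{N}^d\}$. Then for $t\ge0$ (derivatives in $t$ for $t>0$): (i) $D_iU^j_tf=D_jU^i_tf$ for $i,j=1,\dots,d$; (ii) $D_jP_tf=-\frac{\partial}{\partial t}U^j_tf$ for $j=1,\dots,d$; (iii) if $A=0$, then $\sum_{j=1}^dD_jU^j_tf=\frac{\partial}{\partial t}P_tf$; if $A>0$, then $\sum_{j=1}^dD_jU^j_tf=\frac{\partial}{\partial t}P_t\big(f-A\mathfrak{L}^{-1}\Pi_0f\big)$; (iv) $\big(\frac{\partial^2}{\partial t^2}-\mathbb{L}\big)P_tf=0$ and $\big(\frac{\partial^2}{\partial t^2}-\mathbb{L}\big)U^j_tf=0$ for $j=1,\dots,d$.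
   Context: $\mathbb{N}=\{0,1,2,\dots\}$; $\langle\cdot,\cdot\rangle_\mu$ is the inner product of $L^2(\mathbb{X},\mu)$; $\lfloor\cdot\rfloor$ is the floor function. *)

theory Defs
  imports "HOL-Analysis.Analysis"
begin

definition C1_on :: "real set \<Rightarrow> (real \<Rightarrow> real) \<Rightarrow> bool" where
  "C1_on S f \<longleftrightarrow> (\<forall>x\<in>S. f field_differentiable (at x)) \<and> continuous_on S (deriv f)"

definition C2_on :: "real set \<Rightarrow> (real \<Rightarrow> real) \<Rightarrow> bool" where
  "C2_on S f \<longleftrightarrow> C1_on S f \<and> C1_on S (deriv f)"

definition Cinf_on :: "real set \<Rightarrow> (real \<Rightarrow> real) \<Rightarrow> bool" where
  "Cinf_on S f \<longleftrightarrow> (\<forall>k. \<forall>x\<in>S. ((deriv ^^ k) f) field_differentiable (at x))"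

text \<open>X = (0,c), X_SYM = (-c,0) \<union> (0,c), and the d-fold product (points are
  extensional functions on the index set {..<d}, coordinates indexed 0..d-1).\<close>

definition Xint :: "ereal \<Rightarrow> real set" where
  "Xint c = {x. 0 < x \<and> ereal x < c}"

definition Xsym :: "ereal \<Rightarrow> real set" where
  "Xsym c = {x. x \<noteq> 0 \<and> ereal \<bar>x\<bar> < c}"

definition Xd :: "ereal \<Rightarrow> nat \<Rightarrow> (nat \<Rightarrow> real) set" where
  "Xd c d = ({..<d} \<rightarrow>\<^sub>E Xsym c)"

definition Nd :: "nat \<Rightarrow> (nat \<Rightarrow> nat) set" where
  "Nd d = ({..<d} \<rightarrow>\<^sub>E (UNIV :: nat set))"

definition L2 :: "'a measure \<Rightarrow> ('a \<Rightarrow> real) \<Rightarrow> bool" where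
  "L2 M f \<longleftrightarrow> f \<in> borel_measurable M \<and> integrable M (\<lambda>x. (f x)\<^sup>2)"

definition ip :: "'a measure \<Rightarrow> ('a \<Rightarrow> real) \<Rightarrow> ('a \<Rightarrow> real) \<Rightarrow> real" where
  "ip M f g = (\<integral>x. f x * g x \<partial>M)"

definition ONB :: "'a measure \<Rightarrow> (nat \<Rightarrow> 'a \<Rightarrow> real) \<Rightarrow> bool" where
  "ONB M \<phi> \<longleftrightarrow> (\<forall>k. L2 M (\<phi> k)) \<and>
     (\<forall>k m. ip M (\<phi> k) (\<phi> m) = (if k = m then 1 else 0)) \<and>
     (\<forall>f. L2 M f \<and> (\<forall>k. ip M f (\<phi> k) = 0) \<longrightarrow> (AE x in M. f x = 0))"

definition mu1 :: "ereal \<Rightarrow> (real \<Rightarrow> real) \<Rightarrow> real measure" where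
  "mu1 c w = density (restrict_space lborel (Xint c)) (\<lambda>x. ennreal (w x))"

definition delta :: "(real \<Rightarrow> real) \<Rightarrow> (real \<Rightarrow> real) \<Rightarrow> (real \<Rightarrow> real) \<Rightarrow> real \<Rightarrow> real" where
  "delta p q g x = p x * deriv g x + q x * g x"

definition deltastar :: "(real \<Rightarrow> real) \<Rightarrow> (real \<Rightarrow> real) \<Rightarrow> (real \<Rightarrow> real) \<Rightarrow> (real \<Rightarrow> real) \<Rightarrow> real \<Rightarrow> real" where
  "deltastar w p q g x = - p x * deriv g x + q x * g x - p x * (deriv w x / w x) * g x - deriv p x * g x"

definition Lop :: "(real \<Rightarrow> real) \<Rightarrow> (real \<Rightarrow> real) \<Rightarrow> (real \<Rightarrow> real) \<Rightarrow> real \<Rightarrow> (real \<Rightarrow> real) \<Rightarrow> real \<Rightarrow> real" where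
  "Lop w p q a g x = a * g x + deltastar w p q (delta p q g) x"

definition evenext :: "(real \<Rightarrow> real) \<Rightarrow> real \<Rightarrow> real" where
  "evenext g x = g \<bar>x\<bar>"

definition oddext :: "(real \<Rightarrow> real) \<Rightarrow> real \<Rightarrow> real" where
  "oddext g x = sgn x * g \<bar>x\<bar>"

definition Phi1 :: "(real \<Rightarrow> real) \<Rightarrow> (real \<Rightarrow> real) \<Rightarrow> real \<Rightarrow> (nat \<Rightarrow> real \<Rightarrow> real)
                    \<Rightarrow> (nat \<Rightarrow> real) \<Rightarrow> nat \<Rightarrow> real \<Rightarrow> real" where
  "Phi1 p q a phi lam n x =
     (if even n then (1 / sqrt 2) * evenext (phi (n div 2)) x
      else - (1 / sqrt 2) * (lam ((n + 1) div 2) - a) powr (-1/2)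
             * delta (evenext p) (oddext q) (evenext (phi ((n + 1) div 2))) x)"

definition PhiD :: "nat \<Rightarrow> (nat \<Rightarrow> real \<Rightarrow> real) \<Rightarrow> (nat \<Rightarrow> real \<Rightarrow> real) \<Rightarrow> (nat \<Rightarrow> real)
                    \<Rightarrow> (nat \<Rightarrow> nat \<Rightarrow> real \<Rightarrow> real) \<Rightarrow> (nat \<Rightarrow> nat \<Rightarrow> real)
                    \<Rightarrow> (nat \<Rightarrow> nat) \<Rightarrow> (nat \<Rightarrow> real) \<Rightarrow> real" where
  "PhiD d p q a phi lam n x = (\<Prod>i<d. Phi1 (p i) (q i) (a i) (phi i) (lam i) (n i) (x i))"

definition lamD :: "nat \<Rightarrow> (nat \<Rightarrow> nat \<Rightarrow> real) \<Rightarrow> (nat \<Rightarrow> nat) \<Rightarrow> real" where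
  "lamD d lam n = (\<Sum>i<d. lam i ((n i + 1) div 2))"

definition muD :: "ereal \<Rightarrow> nat \<Rightarrow> (nat \<Rightarrow> real \<Rightarrow> real) \<Rightarrow> (nat \<Rightarrow> real) measure" where
  "muD c d w = density (restrict_space (PiM {..<d} (\<lambda>_. lborel)) (Xd c d))
                 (\<lambda>x. ennreal (\<Prod>i<d. evenext (w i) (x i)))"

definition partialD :: "nat \<Rightarrow> ((nat \<Rightarrow> real) \<Rightarrow> real) \<Rightarrow> (nat \<Rightarrow> real) \<Rightarrow> real" where
  "partialD j f x = deriv (\<lambda>s. f (x(j := s))) (x j)"

definition sigma :: "nat \<Rightarrow> (nat \<Rightarrow> real) \<Rightarrow> (nat \<Rightarrow> real)" where
  "sigma j x = x(j := - x j)"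

definition DD :: "(nat \<Rightarrow> real \<Rightarrow> real) \<Rightarrow> (nat \<Rightarrow> real \<Rightarrow> real) \<Rightarrow> (nat \<Rightarrow> real \<Rightarrow> real)
                  \<Rightarrow> nat \<Rightarrow> ((nat \<Rightarrow> real) \<Rightarrow> real) \<Rightarrow> (nat \<Rightarrow> real) \<Rightarrow> real" where
  "DD w p q j f x =
     evenext (p j) (x j) * partialD j f x
     + oddext (q j) (x j) * ((f x + f (sigma j x)) / 2)
     + (evenext (p j) (x j) * (deriv (evenext (w j)) (x j) / evenext (w j) (x j))
        + deriv (evenext (p j)) (x j) - oddext (q j) (x j)) * ((f x - f (sigma j x)) / 2)"

definition LLop :: "nat \<Rightarrow> (nat \<Rightarrow> real \<Rightarrow> real) \<Rightarrow> (nat \<Rightarrow> real \<Rightarrow> real) \<Rightarrow> (nat \<Rightarrow> real \<Rightarrow> real)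
                    \<Rightarrow> real \<Rightarrow> ((nat \<Rightarrow> real) \<Rightarrow> real) \<Rightarrow> (nat \<Rightarrow> real) \<Rightarrow> real" where
  "LLop d w p q A f x = A * f x - (\<Sum>i<d. DD w p q i (DD w p q i f) x)"

text \<open>Spectral-calculus operators, given by their eigenfunction expansions
  (pointwise, as set-indexed sums).\<close>

definition coef :: "'a measure \<Rightarrow> ('b \<Rightarrow> 'a \<Rightarrow> real) \<Rightarrow> ('a \<Rightarrow> real) \<Rightarrow> 'b \<Rightarrow> real" where
  "coef M \<Phi> f n = ip M f (\<Phi> n)"

definition Pop :: "'a measure \<Rightarrow> 'b set \<Rightarrow> ('b \<Rightarrow> 'a \<Rightarrow> real) \<Rightarrow> ('b \<Rightarrow> real)
                   \<Rightarrow> real \<Rightarrow> ('a \<Rightarrow> real) \<Rightarrow> 'a \<Rightarrow> real" where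
  "Pop M N \<Phi> L t f x = (\<Sum>\<^sub>\<infinity>n\<in>N. exp (- t * sqrt (L n)) * coef M \<Phi> f n * \<Phi> n x)"

definition Rop :: "'a measure \<Rightarrow> 'b set \<Rightarrow> ('b \<Rightarrow> 'a \<Rightarrow> real) \<Rightarrow> ('b \<Rightarrow> real)
                   \<Rightarrow> (('a \<Rightarrow> real) \<Rightarrow> 'a \<Rightarrow> real) \<Rightarrow> ('a \<Rightarrow> real) \<Rightarrow> 'a \<Rightarrow> real" where
  "Rop M N \<Phi> L D f x = (\<Sum>\<^sub>\<infinity>n\<in>{n\<in>N. L n \<noteq> 0}. L n powr (-1/2) * coef M \<Phi> f n * D (\<Phi> n) x)"

definition LinvPi :: "'a measure \<Rightarrow> 'b set \<Rightarrow> ('b \<Rightarrow> 'a \<Rightarrow> real) \<Rightarrow> ('b \<Rightarrow> real)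
                   \<Rightarrow> ('a \<Rightarrow> real) \<Rightarrow> 'a \<Rightarrow> real" where
  "LinvPi M N \<Phi> L f x = (\<Sum>\<^sub>\<infinity>n\<in>{n\<in>N. L n \<noteq> 0}. (1 / L n) * coef M \<Phi> f n * \<Phi> n x)"

definition PP where
  "PP c d w p q a phi lam t f =
     Pop (muD c d w) (Nd d) (PhiD d p q a phi lam) (lamD d lam) t f"

definition RR where
  "RR c d w p q a phi lam j f =
     Rop (muD c d w) (Nd d) (PhiD d p q a phi lam) (lamD d lam) (DD w p q j) f"

definition UU where
  "UU c d w p q a phi lam t j f = PP c d w p q a phi lam t (RR c d w p q a phi lam j f)"

definition LinvPi0 where
  "LinvPi0 c d w p q a phi lam f =
     LinvPi (muD c d w) (Nd d) (PhiD d p q a phi lam) (lamD d lam) f"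

end

theory Submission
  imports Defs
begin

lemma open_Xsym: "open (Xsym c)"
proof -
  have "Xsym c = {x. x \<noteq> 0} \<inter> (abs -` {x. ereal x < c})" by (auto simp: Xsym_def)
  moreover have "open (abs -` {x::real. ereal x < c})"
    by (rule open_vimage) (auto intro: continuous_intros simp: open_Collect_less continuous_on_ereal)
  moreover have "open {x::real. x \<noteq> 0}" by (simp add: open_Collect_neq) 
  ultimately show ?thesis by auto
qed

lemma open_Xint: "open (Xint c)"
proof -
  have "Xint c = {x. 0 < x} \<inter> Xsym c" by (auto simp: Xsym_def Xint_def)
  then show ?thesis using open_Xsym by (auto simp: open_Collect_less)
qed

lemma Xsym_iff: "x \<in> Xsym c \<longleftrightarrow> x \<noteq> 0 \<and> \<bar>x\<bar> \<in> Xint c"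
  by (auto simp: Xsym_def Xint_def)

lemma Xsym_uminus[simp]: "- x \<in> Xsym c \<longleftrightarrow> x \<in> Xsym c"
  by (auto simp: Xsym_def)

lemma Xint_Xsym: "x \<in> Xint c \<Longrightarrow> x \<in> Xsym c"
  by (auto simp: Xsym_def Xint_def)

lemma evenext_deriv:
  assumes "(g has_real_derivative g') (at \<bar>x\<bar>)" "x \<noteq> 0"
  shows "(evenext g has_real_derivative sgn x * g') (at x)"
proof (cases "x > 0")
  case True
  have d: "(g has_real_derivative g') (at x)" using assms True by simp
  show ?thesis
    by (rule has_field_derivative_transform_within_open[where S="{0<..}", OF _ open_greaterThan])
       (use d True in \<open>auto simp: evenext_def\<close>)
next
  case False
  with assms have x: "x < 0" by auto
  have "((\<lambda>y. g (- y)) has_real_derivative g' * (- 1)) (at x)"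
  proof (rule DERIV_chain2[where f=g])
    show "(g has_real_derivative g') (at (- x))" using assms x by simp
    show "((\<lambda>y. - y) has_real_derivative - 1) (at x)" by (rule derivative_eq_intros) auto
  qed
  then have "((\<lambda>y. g (- y)) has_real_derivative sgn x * g') (at x)" using x by (simp add: mult.commute)
  then show ?thesis
    by (rule has_field_derivative_transform_within_open[where S="{..<0}", OF _ open_lessThan])
       (use x in \<open>auto simp: evenext_def\<close>)
qed

lemma oddext_deriv:
  assumes "(g has_real_derivative g') (at \<bar>x\<bar>)" "x \<noteq> 0"
  shows "(oddext g has_real_derivative g') (at x)"
proof (cases "x > 0")
  case True
  have d: "(g has_real_derivative g') (at x)" using assms True by simp
  show ?thesis
    by (rule has_field_derivative_transform_within_open[where S="{0<..}", OF _ open_greaterThan])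
       (use d True in \<open>auto simp: oddext_def\<close>)
next
  case False
  with assms have x: "x < 0" by auto
  have "((\<lambda>y. g (- y)) has_real_derivative g' * (- 1)) (at x)"
  proof (rule DERIV_chain2[where f=g])
    show "(g has_real_derivative g') (at (- x))" using assms x by simp
    show "((\<lambda>y. - y) has_real_derivative - 1) (at x)" by (rule derivative_eq_intros) auto
  qed
  then have "((\<lambda>y. - g (- y)) has_real_derivative g') (at x)"
    using DERIV_minus by fastforce
  then show ?thesis
    by (rule has_field_derivative_transform_within_open[where S="{..<0}", OF _ open_lessThan])
       (use x in \<open>auto simp: oddext_def\<close>)
qed


definition D1 :: "(real \<Rightarrow> real) \<Rightarrow> (real \<Rightarrow> real) \<Rightarrow> (real \<Rightarrow> real) \<Rightarrow> (real \<Rightarrow> real) \<Rightarrow> real \<Rightarrow> real" where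
  "D1 w p q g x = evenext p x * deriv g x + oddext q x * ((g x + g (-x)) / 2)
     + (evenext p x * (deriv (evenext w) x / evenext w x) + deriv (evenext p) x - oddext q x) * ((g x - g (-x)) / 2)"

definition fl :: "nat \<Rightarrow> nat" where
  "fl n = (if n = 0 then 0 else if even n then n - 1 else n + 1)"

lemma fl_fl[simp]: "fl (fl n) = n"
  by (auto simp: fl_def)

lemma fl_half[simp]: "(fl n + 1) div 2 = (n + 1) div 2"
  by (auto simp: fl_def elim!: evenE oddE)

lemma fl_half'[simp]: "Suc (fl n) div 2 = Suc n div 2"
  using fl_half[of n] by simp

lemma L2_prod_integrable:
  fixes f g :: "'a \<Rightarrow> real"
  assumes "integrable M (\<lambda>x. f x * f x)" "f \<in> borel_measurable M"
    "integrable M (\<lambda>x. g x * g x)" "g \<in> borel_measurable M"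
  shows "integrable M (\<lambda>x. f x * g x)"
proof (rule Bochner_Integration.integrable_bound[where f="\<lambda>x. f x * f x + g x * g x"])
  show "integrable M (\<lambda>x. f x * f x + g x * g x)" using assms by auto
  show "(\<lambda>x. f x * g x) \<in> borel_measurable M" using assms by auto
  show "AE x in M. norm (f x * g x) \<le> norm (f x * f x + g x * g x)"
  proof (rule AE_I2)
    fix x
    have "2 * \<bar>f x * g x\<bar> \<le> f x * f x + g x * g x"
      using sum_squares_bound[of "\<bar>f x\<bar>" "\<bar>g x\<bar>"] by (simp add: abs_mult power2_eq_square)
    moreover have "0 \<le> f x * f x + g x * g x" by simp
    ultimately show "norm (f x * g x) \<le> norm (f x * f x + g x * g x)" by simp
  qed
qed

lemma lborel_reflect:
  fixes K :: "real \<Rightarrow> real"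
  assumes "integrable lborel K"
  shows "integrable lborel (\<lambda>x. K (- x))" "(\<integral>x. K (- x) \<partial>lborel) = integral\<^sup>L lborel K"
proof -
  have m: "K \<in> borel_measurable borel" using assms by auto
  have "integrable (distr lborel borel uminus) K" using assms by (simp add: lborel_distr_uminus)
  then show "integrable lborel (\<lambda>x. K (- x))" by (subst (asm) integrable_distr_eq) (use m in auto)
  have "integral\<^sup>L (distr lborel borel uminus) K = (\<integral>x. K (- x) \<partial>lborel)"
    by (rule integral_distr) (use m in auto)
  then show "(\<integral>x. K (- x) \<partial>lborel) = integral\<^sup>L lborel K" by (simp add: lborel_distr_uminus)
qed

lemma C1_onD: "C1_on S f \<Longrightarrow> x \<in> S \<Longrightarrow> (f has_real_derivative deriv f x) (at x)"
  unfolding C1_on_def using DERIV_deriv_iff_field_differentiable by blast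

lemma infsum_combo:
  fixes F :: "'n \<Rightarrow> real" and b :: "'k \<Rightarrow> real"
  assumes G: "finite G"
  shows "(\<Sum>\<^sub>\<infinity>n\<in>N. F n * (\<Sum>k\<in>G. if hh k = n then b k else 0)) = (\<Sum>k\<in>G. if hh k \<in> N then b k * F (hh k) else 0)"
proof -
  have "(\<Sum>\<^sub>\<infinity>n\<in>N. F n * (\<Sum>k\<in>G. if hh k = n then b k else 0))
      = (\<Sum>\<^sub>\<infinity>n\<in>N \<inter> hh ` G. F n * (\<Sum>k\<in>G. if hh k = n then b k else 0))"
  proof (rule infsum_cong_neutral)
    fix n assume "n \<in> N - N \<inter> hh ` G"
    then have "(\<Sum>k\<in>G. if hh k = n then b k else 0) = 0" by (intro sum.neutral) auto
    then show "F n * (\<Sum>k\<in>G. if hh k = n then b k else 0) = 0" by simp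
  qed auto
  also have "\<dots> = (\<Sum>n\<in>N \<inter> hh ` G. F n * (\<Sum>k\<in>G. if hh k = n then b k else 0))"
    using G by simp
  also have "\<dots> = (\<Sum>n\<in>N \<inter> hh ` G. \<Sum>k\<in>G. if hh k = n then b k * F (hh k) else 0)"
    by (simp add: sum_distrib_left if_distrib mult.commute cong: if_cong)
  also have "\<dots> = (\<Sum>k\<in>G. \<Sum>n\<in>N \<inter> hh ` G. if hh k = n then b k * F (hh k) else 0)"
    by (rule sum.swap)
  also have "\<dots> = (\<Sum>k\<in>G. if hh k \<in> N then b k * F (hh k) else 0)"
    using G by (intro sum.cong refl) (auto simp: sum.delta)
  finally show ?thesis .
qed

definition "D1B w p q x = ((oddext q x + (evenext p x * (deriv (evenext w) x / evenext w x) + deriv (evenext p) x - oddext q x)) / 2)"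
definition "D1C w p q x = ((oddext q x - (evenext p x * (deriv (evenext w) x / evenext w x) + deriv (evenext p) x - oddext q x)) / 2)"

lemma D1_alt: "D1 w p q g x = evenext p x * deriv g x + D1B w p q x * g x + D1C w p q x * g (-x)"
  unfolding D1_def D1B_def D1C_def by (simp add: algebra_simps add_divide_distrib diff_divide_distrib)

lemma D1_cong:
  assumes "open S" "x \<in> S" "- x \<in> S" "\<And>s. s \<in> S \<Longrightarrow> g1 s = g2 s"
  shows "D1 w p q g1 x = D1 w p q g2 x"
proof -
  have "deriv g1 x = deriv g2 x"
    by (rule deriv_cong_ev[OF _ refl]) (use assms in \<open>auto simp: eventually_nhds\<close>)
  then show ?thesis unfolding D1_def using assms by simp
qed

lemma D1_sum:
  assumes G: "finite G" and d: "\<And>k. k \<in> G \<Longrightarrow> (u k has_real_derivative u' k) (at x)"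
  shows "D1 w p q (\<lambda>s. \<Sum>k\<in>G. cc k * u k s) x = (\<Sum>k\<in>G. cc k * D1 w p q (u k) x)"
proof -
  have "((\<lambda>s. \<Sum>k\<in>G. cc k * u k s) has_real_derivative (\<Sum>k\<in>G. cc k * u' k)) (at x)"
    using G d by (intro DERIV_sum DERIV_cmult) auto
  then have 1: "deriv (\<lambda>s. \<Sum>k\<in>G. cc k * u k s) x = (\<Sum>k\<in>G. cc k * u' k)" by (rule DERIV_imp_deriv)
  have 2: "deriv (u k) x = u' k" if "k \<in> G" for k using d[OF that] by (rule DERIV_imp_deriv)
  show ?thesis unfolding D1_alt 1
    by (simp add: 2 sum_distrib_left sum.distrib algebra_simps cong: sum.cong)
qed

lemma DD_eq_D1: "DD w p q j f x = D1 (w j) (p j) (q j) (\<lambda>s. f (x(j := s))) (x j)"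
  unfolding DD_def D1_def partialD_def sigma_def by simp

locale oneD =
  fixes c :: ereal and W P Q :: "real \<Rightarrow> real" and a :: real
    and \<phi> :: "nat \<Rightarrow> real \<Rightarrow> real" and lam :: "nat \<Rightarrow> real"
  assumes W_reg: "C2_on (Xint c) W" and W_pos: "\<forall>x\<in>Xint c. W x > 0"
    and P_reg: "C2_on (Xint c) P" and Q_reg: "C1_on (Xint c) Q"
    and onb: "ONB (mu1 c W) \<phi>" and smooth: "\<forall>k. Cinf_on (Xint c) (\<phi> k)"
    and eigen: "\<forall>k. \<forall>x\<in>Xint c. Lop W P Q a (\<phi> k) x = lam k * \<phi> k x"
    and lam_mono: "strict_mono lam"
    and delta_L2: "\<forall>k. L2 (mu1 c W) (delta P Q (\<phi> k))"
    and green: "\<forall>k m. ip (mu1 c W) (delta P Q (\<phi> k)) (delta P Q (\<phi> m))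
       = ip (mu1 c W) (deltastar W P Q (delta P Q (\<phi> k))) (\<phi> m)"
    and a_lam0: "a = lam 0"
begin

definition h where "h k = delta P Q (\<phi> k)"
definition r where "r k = lam k - a"

definition sc where
  "sc n = (if even n then - sqrt (r (n div 2)) else sqrt (r ((n + 1) div 2)))"

lemma r_pos: "k > 0 \<Longrightarrow> r k > 0"
  using lam_mono a_lam0 unfolding r_def strict_mono_def by auto

lemma r0: "r 0 = 0" unfolding r_def using a_lam0 by simp

lemma dW: "y \<in> Xint c \<Longrightarrow> (W has_real_derivative deriv W y) (at y)"
  using W_reg C1_onD unfolding C2_on_def by blast
lemma dP: "y \<in> Xint c \<Longrightarrow> (P has_real_derivative deriv P y) (at y)"
  using P_reg C1_onD unfolding C2_on_def by blast
lemma dQ: "y \<in> Xint c \<Longrightarrow> (Q has_real_derivative deriv Q y) (at y)"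
  using Q_reg C1_onD by blast
lemma dphi: "y \<in> Xint c \<Longrightarrow> (\<phi> k has_real_derivative deriv (\<phi> k) y) (at y)"
proof -
  assume y: "y \<in> Xint c"
  have "((deriv ^^ 0) (\<phi> k)) field_differentiable (at y)" using smooth y unfolding Cinf_on_def by blast
  then show ?thesis by (simp add: DERIV_deriv_iff_field_differentiable)
qed
lemma ddphi: "y \<in> Xint c \<Longrightarrow> (deriv (\<phi> k) has_real_derivative deriv (deriv (\<phi> k)) y) (at y)"
proof -
  assume y: "y \<in> Xint c"
  have "((deriv ^^ 1) (\<phi> k)) field_differentiable (at y)" using smooth y unfolding Cinf_on_def by blast
  then show ?thesis by (simp add: DERIV_deriv_iff_field_differentiable)
qed

lemma dh: "y \<in> Xint c \<Longrightarrow> (h k has_real_derivative deriv (h k) y) (at y)"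
proof -
  assume y: "y \<in> Xint c"
  have "(h k has_real_derivative (deriv P y * deriv (\<phi> k) y + deriv (deriv (\<phi> k)) y * P y
        + (deriv Q y * \<phi> k y + deriv (\<phi> k) y * Q y))) (at y)"
    unfolding h_def delta_def
    by (intro DERIV_add DERIV_mult dP dQ dphi ddphi y)
  then show ?thesis using DERIV_imp_deriv by metis
qed

lemma eigen': "y \<in> Xint c \<Longrightarrow> deltastar W P Q (h k) y = r k * \<phi> k y"
  using eigen unfolding Lop_def h_def r_def by (auto simp: algebra_simps)


lemma space_mu1: "space (mu1 c W) = Xint c"
  by (simp add: mu1_def space_restrict_space)

lemma Xint_sets[measurable]: "Xint c \<in> sets lborel"
  using open_Xint by simp
lemma Xint_borel[measurable]: "Xint c \<in> sets borel"
  using open_Xint by simp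

lemma contW: "continuous_on (Xint c) W"
  using dW by (intro continuous_at_imp_continuous_on) (auto dest: DERIV_isCont)

lemma meas_W[measurable]: "W \<in> borel_measurable (restrict_space lborel (Xint c))"
proof -
  have "W \<in> borel_measurable (restrict_space borel (Xint c))"
    by (rule borel_measurable_continuous_on_restrict[OF contW])
  then show ?thesis
    by (subst measurable_cong_sets[OF sets_restrict_space_cong[OF sets_lborel] refl])
qed

lemma sets_mu1: "sets (mu1 c W) = sets (restrict_space lborel (Xint c))"
  by (simp add: mu1_def)

lemma mu1_meas_iff: "F \<in> borel_measurable (mu1 c W) \<longleftrightarrow> F \<in> borel_measurable (restrict_space lborel (Xint c))"
  by (simp add: measurable_cong_sets[OF sets_mu1 refl])

lemma AE_W: "AE x in restrict_space lborel (Xint c). 0 \<le> W x"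
  using W_pos by (subst AE_restrict_space_iff) (auto intro: less_imp_le)

lemma mu1_integrable_iff:
  assumes F: "F \<in> borel_measurable (mu1 c W)"
  shows "integrable (mu1 c W) F \<longleftrightarrow> integrable lborel (\<lambda>x. indicator (Xint c) x * (W x * F x))"
proof -
  have F': "F \<in> borel_measurable (restrict_space lborel (Xint c))" using F mu1_meas_iff by blast
  show ?thesis unfolding mu1_def
    by (subst integrable_density[OF F' meas_W AE_W], subst integrable_restrict_space) auto
qed

lemma mu1_integral:
  assumes F: "F \<in> borel_measurable (mu1 c W)"
  shows "integral\<^sup>L (mu1 c W) F = (\<integral>x. indicator (Xint c) x * (W x * F x) \<partial>lborel)"
proof -
  have F': "F \<in> borel_measurable (restrict_space lborel (Xint c))" using F mu1_meas_iff by blast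
  show ?thesis unfolding mu1_def
    by (subst integral_density[OF F' meas_W AE_W], subst integral_restrict_space) auto
qed

lemma h_L2: "integrable (mu1 c W) (\<lambda>x. h k x * h k x)" "h k \<in> borel_measurable (mu1 c W)"
  using delta_L2 unfolding L2_def h_def by (auto simp: power2_eq_square)

lemma phi_L2: "integrable (mu1 c W) (\<lambda>x. \<phi> k x * \<phi> k x)" "\<phi> k \<in> borel_measurable (mu1 c W)"
  using onb unfolding ONB_def L2_def by (auto simp: power2_eq_square)

lemma h0_zero: "y \<in> Xint c \<Longrightarrow> h 0 y = 0"
proof (rule ccontr)
  assume y: "y \<in> Xint c" and ne: "h 0 y \<noteq> 0"
  have "ip (mu1 c W) (h 0) (h 0) = ip (mu1 c W) (deltastar W P Q (h 0)) (\<phi> 0)"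
    using green unfolding h_def by blast
  also have "\<dots> = (\<integral>x. 0 \<partial>mu1 c W)"
    unfolding ip_def by (rule Bochner_Integration.integral_cong) (auto simp: space_mu1 eigen' r0)
  finally have "(\<integral>x. h 0 x * h 0 x \<partial>mu1 c W) = 0" by (simp add: ip_def)
  then have "AE x in mu1 c W. h 0 x * h 0 x = 0"
    using integral_nonneg_eq_0_iff_AE[OF h_L2(1)] by simp
  then have "AE x in restrict_space lborel (Xint c). 0 < ennreal (W x) \<longrightarrow> h 0 x * h 0 x = 0"
    unfolding mu1_def by (subst (asm) AE_density) auto
  then have ae: "AE x in lborel. x \<in> Xint c \<longrightarrow> 0 < ennreal (W x) \<longrightarrow> h 0 x * h 0 x = 0"
    by (subst (asm) AE_restrict_space_iff) auto
  have conth: "continuous_on (Xint c) (h 0)"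
    using dh by (intro continuous_at_imp_continuous_on) (auto dest: DERIV_isCont)
  have "\<forall>B. open B \<longrightarrow> open (h 0 -` B \<inter> Xint c)"
    using continuous_on_open_vimage[OF open_Xint[of c]] conth by blast
  moreover have "open (- {0::real})" by (intro open_Compl closed_singleton)
  ultimately have "open (h 0 -` (- {0}) \<inter> Xint c)" by blast
  then have "open (Xint c \<inter> h 0 -` (- {0}))" by (simp add: Int_commute)
  moreover have "y \<in> Xint c \<inter> h 0 -` (- {0})" using y ne by auto
  ultimately obtain e where e: "e > 0" "ball y e \<subseteq> Xint c \<inter> h 0 -` (- {0})"
    by (meson openE)
  from ae obtain N where N: "{x \<in> space lborel. \<not> (x \<in> Xint c \<longrightarrow> 0 < ennreal (W x) \<longrightarrow> h 0 x * h 0 x = 0)} \<subseteq> N"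
    "emeasure lborel N = 0" "N \<in> sets lborel" by (rule AE_E)
  have "{y - e <..< y + e} \<subseteq> N"
  proof
    fix x assume "x \<in> {y - e <..< y + e}"
    then have "x \<in> ball y e" by (auto simp: dist_real_def)
    with e have "x \<in> Xint c" "h 0 x \<noteq> 0" by auto
    with W_pos N(1) show "x \<in> N" by auto
  qed
  then have "emeasure lborel {y - e <..< y + e} \<le> emeasure lborel N"
    by (rule emeasure_mono) (use N in auto)
  with e N show False by simp
qed


abbreviation Ph where "Ph n \<equiv> Phi1 P Q a \<phi> lam n"

definition psi where
  "psi n x = (if even n then (1 / sqrt 2) * evenext (\<phi> (n div 2)) x
     else - (1 / sqrt 2) * r ((n + 1) div 2) powr (-1/2) * oddext (h ((n + 1) div 2)) x)"

definition psi' where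
  "psi' n x = (if even n then (1 / sqrt 2) * (sgn x * deriv (\<phi> (n div 2)) \<bar>x\<bar>)
     else - (1 / sqrt 2) * r ((n + 1) div 2) powr (-1/2) * deriv (h ((n + 1) div 2)) \<bar>x\<bar>)"

lemma Xsym_abs: "x \<in> Xsym c \<Longrightarrow> \<bar>x\<bar> \<in> Xint c" and Xsym_nz: "x \<in> Xsym c \<Longrightarrow> x \<noteq> 0"
  by (auto simp: Xsym_iff)

lemma deriv_evenext: "x \<in> Xsym c \<Longrightarrow> (g has_real_derivative g') (at \<bar>x\<bar>) \<Longrightarrow> deriv (evenext g) x = sgn x * g'"
  using evenext_deriv Xsym_nz DERIV_imp_deriv by blast

lemma Ph_psi: "x \<in> Xsym c \<Longrightarrow> Ph n x = psi n x"
proof -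
  assume x: "x \<in> Xsym c"
  have d: "deriv (evenext (\<phi> k)) x = sgn x * deriv (\<phi> k) \<bar>x\<bar>" for k
    using deriv_evenext[OF x dphi[OF Xsym_abs[OF x]]] .
  show ?thesis
    unfolding Phi1_def psi_def delta_def d h_def
    by (auto simp: evenext_def oddext_def r_def algebra_simps)
qed

lemma psi_deriv: "x \<in> Xsym c \<Longrightarrow> (psi n has_real_derivative psi' n x) (at x)"
proof -
  assume x: "x \<in> Xsym c"
  show ?thesis
  proof (cases "even n")
    case True
    have "(evenext (\<phi> (n div 2)) has_real_derivative sgn x * deriv (\<phi> (n div 2)) \<bar>x\<bar>) (at x)"
      by (rule evenext_deriv[OF dphi[OF Xsym_abs[OF x]] Xsym_nz[OF x]])
    then have "((\<lambda>x. (1 / sqrt 2) * evenext (\<phi> (n div 2)) x) has_real_derivative (1 / sqrt 2) * (sgn x * deriv (\<phi> (n div 2)) \<bar>x\<bar>)) (at x)"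
      by (rule DERIV_cmult)
    moreover have "psi n = (\<lambda>x. (1 / sqrt 2) * evenext (\<phi> (n div 2)) x)" using True by (auto simp: psi_def fun_eq_iff)
    ultimately show ?thesis using True unfolding psi'_def by simp
  next
    case False
    have "(oddext (h ((n + 1) div 2)) has_real_derivative deriv (h ((n + 1) div 2)) \<bar>x\<bar>) (at x)"
      by (rule oddext_deriv[OF dh[OF Xsym_abs[OF x]] Xsym_nz[OF x]])
    then have "((\<lambda>x. (- (1 / sqrt 2) * r ((n + 1) div 2) powr (-1/2)) * oddext (h ((n + 1) div 2)) x) has_real_derivative (- (1 / sqrt 2) * r ((n + 1) div 2) powr (-1/2)) * deriv (h ((n + 1) div 2)) \<bar>x\<bar>) (at x)"
      by (rule DERIV_cmult)
    moreover have "psi n = (\<lambda>x. (- (1 / sqrt 2) * r ((n + 1) div 2) powr (-1/2)) * oddext (h ((n + 1) div 2)) x)" using False by (auto simp: psi_def fun_eq_iff)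
    ultimately show ?thesis using False unfolding psi'_def by simp
  qed
qed

lemma Ph_deriv: "x \<in> Xsym c \<Longrightarrow> (Ph n has_real_derivative psi' n x) (at x)"
  by (rule has_field_derivative_transform_within_open[OF psi_deriv open_Xsym])
     (auto simp: Ph_psi)

lemma Ph_deriv_eq: "x \<in> Xsym c \<Longrightarrow> deriv (Ph n) x = psi' n x"
  using Ph_deriv DERIV_imp_deriv by blast

lemma Ph_neg: "x \<in> Xsym c \<Longrightarrow> Ph n (-x) = (if even n then Ph n x else - Ph n x)"
  by (simp add: Ph_psi psi_def evenext_def oddext_def)

lemma sqrt_powr: "(t::real) > 0 \<Longrightarrow> sqrt t * t powr (-1/2) = 1"
  by (simp add: sqrt_def root_powr_inverse powr_add[symmetric])

lemma D1_Ph: "x \<in> Xsym c \<Longrightarrow> D1 W P Q (Ph n) x = sc n * Ph (fl n) x"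
proof -
  assume x: "x \<in> Xsym c"
  define y where "y = \<bar>x\<bar>"
  define s where "s = sgn x"
  have y: "y \<in> Xint c" unfolding y_def using Xsym_abs[OF x] .
  have ss: "s * s = 1" unfolding s_def using Xsym_nz[OF x] by (simp add: sgn_if)
  have dW': "deriv (evenext W) x = s * deriv W y"
    unfolding s_def y_def by (rule deriv_evenext[OF x dW[OF Xsym_abs[OF x]]])
  have dP': "deriv (evenext P) x = s * deriv P y"
    unfolding s_def y_def by (rule deriv_evenext[OF x dP[OF Xsym_abs[OF x]]])
  have eW: "evenext W x = W y" "evenext P x = P y" "oddext Q x = s * Q y"
    by (simp_all add: evenext_def oddext_def y_def s_def)
  have Wy: "W y > 0" using W_pos y by auto
  have es: "deltastar W P Q (h k) y = r k * \<phi> k y" for k using eigen'[OF y] .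
  have hk: "h k y = P y * deriv (\<phi> k) y + Q y * \<phi> k y" for k by (simp add: h_def delta_def)
  have Phx: "Ph m x = (if even m then (1 / sqrt 2) * \<phi> (m div 2) y
     else - (1 / sqrt 2) * r ((m + 1) div 2) powr (-1/2) * (s * h ((m + 1) div 2) y))" for m
    using Ph_psi[OF x] by (simp add: psi_def evenext_def oddext_def y_def s_def)
  have dPh: "deriv (Ph n) x = (if even n then (1 / sqrt 2) * (s * deriv (\<phi> (n div 2)) y)
     else - (1 / sqrt 2) * r ((n + 1) div 2) powr (-1/2) * deriv (h ((n + 1) div 2)) y)"
    using Ph_deriv_eq[OF x] by (simp add: psi'_def y_def s_def)
  have neg: "Ph n (-x) = (if even n then Ph n x else - Ph n x)" using Ph_neg[OF x] .
  show ?thesis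
  proof (cases "even n")
    case True
    define k where "k = n div 2"
    have D: "D1 W P Q (Ph n) x = (1 / sqrt 2) * s * h k y"
      unfolding D1_def dW' dP' eW neg using True
      by (simp add: dPh Phx k_def hk algebra_simps)
    show ?thesis
    proof (cases "k = 0")
      case True
      then have "n = 0" using \<open>even n\<close> k_def by auto
      then show ?thesis using D True h0_zero[OF y] by (simp add: sc_def r0)
    next
      case False
      then have n: "n > 0" "fl n = n - 1" "odd (n - 1)" "((n - 1) + 1) div 2 = k"
        using \<open>even n\<close> k_def by (auto simp: fl_def)
      have rk: "r k > 0" using r_pos False by auto
      have "sc n * Ph (fl n) x = (sqrt (r k) * r k powr (-1/2)) * ((1 / sqrt 2) * s * h k y)"
        using \<open>even n\<close> n by (simp add: sc_def Phx k_def)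
      also have "\<dots> = (1 / sqrt 2) * s * h k y" using sqrt_powr[OF rk] by simp
      finally show ?thesis using D by simp
    qed
  next
    case False
    define k where "k = (n + 1) div 2"
    have k: "k > 0" using False k_def by simp
    have rk: "r k > 0" using r_pos k by auto
    have n: "fl n = n + 1" "even (n + 1)" "(n + 1) div 2 = k" using False k_def by (auto simp: fl_def odd_pos)
    have ds: "- P y * deriv (h k) y + Q y * h k y - P y * (deriv W y / W y) * h k y - deriv P y * h k y = r k * \<phi> k y"
      using es[of k] by (simp add: deltastar_def)
    have "D1 W P Q (Ph n) x = - (1 / sqrt 2) * r k powr (-1/2) *
        (P y * deriv (h k) y + (P y * (deriv W y / W y) + deriv P y - Q y) * ((s * s) * h k y))"
      unfolding D1_def dW' dP' eW neg using False Wy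
      by (simp add: dPh Phx k_def field_simps)
    also have "\<dots> = (1 / sqrt 2) * (r k powr (-1/2) * r k) * \<phi> k y"
      unfolding ss using ds by (simp add: algebra_simps)
    also have "r k powr (-1/2) * r k = sqrt (r k)"
    proof -
      have "r k powr (-1/2) = 1 / sqrt (r k)" using sqrt_powr[OF rk] rk by (simp add: field_simps)
      then show ?thesis using rk by (simp add: real_div_sqrt)
    qed
    finally show ?thesis using False n by (simp add: sc_def Phx)
  qed
qed


definition v where
  "v n y = (if even n then (1 / sqrt 2) * \<phi> (n div 2) y
     else - (1 / sqrt 2) * r ((n + 1) div 2) powr (-1/2) * h ((n + 1) div 2) y)"

lemma Ph_v: "y \<in> Xint c \<Longrightarrow> Ph n y = v n y"
  using Ph_psi[OF Xint_Xsym] by (auto simp: psi_def v_def evenext_def oddext_def Xint_def)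

lemma v_L2: "integrable (mu1 c W) (\<lambda>x. v n x * v n x)" "v n \<in> borel_measurable (mu1 c W)"
proof -
  show "v n \<in> borel_measurable (mu1 c W)"
    using phi_L2(2) h_L2(2) unfolding v_def[abs_def] by (cases "even n") auto
  show "integrable (mu1 c W) (\<lambda>x. v n x * v n x)"
  proof (cases "even n")
    case True
    then show ?thesis using phi_L2(1)[of "n div 2"] unfolding v_def
      by (auto intro!: integrable_mult_right simp: algebra_simps)
  next
    case False
    define k where "k = (n+1) div 2"
    have eq: "(\<lambda>x. v n x * v n x) = (\<lambda>x. (r k powr (-1/2) * r k powr (-1/2) / 2) * (h k x * h k x))"
      using False by (auto simp: v_def fun_eq_iff k_def field_simps)
    show ?thesis unfolding eq using h_L2(1)[of k] by (rule integrable_mult_right)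
  qed
qed

lemma v_prod_int: "integrable (mu1 c W) (\<lambda>x. v n x * v m x)"
  by (rule L2_prod_integrable[OF v_L2 v_L2])

lemma ip_phi: "ip (mu1 c W) (\<phi> k) (\<phi> l) = (if k = l then 1 else 0)"
  using onb unfolding ONB_def by blast

lemma ip_h: "ip (mu1 c W) (h k) (h l) = r k * (if k = l then 1 else 0)"
proof -
  have "ip (mu1 c W) (h k) (h l) = ip (mu1 c W) (deltastar W P Q (h k)) (\<phi> l)"
    using green unfolding h_def by blast
  also have "\<dots> = (\<integral>x. r k * (\<phi> k x * \<phi> l x) \<partial>mu1 c W)"
    unfolding ip_def by (rule Bochner_Integration.integral_cong) (auto simp: space_mu1 eigen')
  also have "\<dots> = r k * ip (mu1 c W) (\<phi> k) (\<phi> l)" by (simp add: ip_def)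
  finally show ?thesis by (simp add: ip_phi)
qed

lemma powr_half_sq: "t > 0 \<Longrightarrow> (t::real) powr (-1/2) * t powr (-1/2) * t = 1"
proof -
  assume t: "t > 0"
  have "t powr (-1/2) * t powr (-1/2) = t powr (-1)" by (simp add: powr_add[symmetric])
  then show ?thesis using t by (simp add: powr_minus)
qed

lemma v_ip: "(even n \<longleftrightarrow> even m) \<Longrightarrow> (\<integral>x. v n x * v m x \<partial>mu1 c W) = (if n = m then 1/2 else 0)"
proof (cases "even n")
  case True
  assume "even n \<longleftrightarrow> even m"
  with True have m: "even m" by simp
  have "(\<integral>x. v n x * v m x \<partial>mu1 c W) = (1/2) * ip (mu1 c W) (\<phi> (n div 2)) (\<phi> (m div 2))"
    using True m unfolding ip_def v_def by (simp add: algebra_simps)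
  also have "\<dots> = (if n = m then 1/2 else 0)" using True m by (auto simp: ip_phi elim!: evenE)
  finally show ?thesis .
next
  case False
  assume "even n \<longleftrightarrow> even m"
  with False have m: "odd m" by simp
  define k l where "k = (n+1) div 2" and "l = (m+1) div 2"
  have kl: "k > 0" "l > 0" "n = m \<longleftrightarrow> k = l" using False m unfolding k_def l_def
    by (auto elim!: oddE)
  have eq: "(\<lambda>x. v n x * v m x) = (\<lambda>x. ((1/2) * r k powr (-1/2) * r l powr (-1/2)) * (h k x * h l x))"
    using False m by (auto simp: v_def fun_eq_iff k_def l_def field_simps)
  have "(\<integral>x. v n x * v m x \<partial>mu1 c W) = (1/2) * r k powr (-1/2) * r l powr (-1/2) * ip (mu1 c W) (h k) (h l)"
    unfolding eq ip_def by simp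
  also have "\<dots> = (if n = m then 1/2 else 0)"
    using kl powr_half_sq[OF r_pos[OF kl(1)]] by (auto simp: ip_h algebra_simps)
  finally show ?thesis .
qed


lemma sym_ip:
  shows "integrable lborel (\<lambda>x. indicator (Xsym c) x * evenext W x * (Ph n x * Ph m x))"
    and "(\<integral>x. indicator (Xsym c) x * evenext W x * (Ph n x * Ph m x) \<partial>lborel) = (if n = m then 1 else 0)"
proof -
  define K where "K x = indicator (Xint c) x * (W x * (v n x * v m x))" for x
  define e :: real where "e = (if (even n \<longleftrightarrow> even m) then 1 else -1)"
  have Fm: "(\<lambda>x. v n x * v m x) \<in> borel_measurable (mu1 c W)" using v_L2(2) by auto
  have intK: "integrable lborel K"
    using mu1_integrable_iff[OF Fm] v_prod_int unfolding K_def by blast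
  have valK: "integral\<^sup>L lborel K = (\<integral>x. v n x * v m x \<partial>mu1 c W)"
    using mu1_integral[OF Fm] unfolding K_def by simp
  have G: "(\<lambda>x. indicator (Xsym c) x * evenext W x * (Ph n x * Ph m x)) = (\<lambda>x. K x + e * K (- x))"
  proof
    fix x :: real
    show "indicator (Xsym c) x * evenext W x * (Ph n x * Ph m x) = K x + e * K (- x)"
    proof (cases "x \<in> Xsym c")
      case True
      show ?thesis
      proof (cases "x > 0")
        case True
        with \<open>x \<in> Xsym c\<close> have x: "x \<in> Xint c" "- x \<notin> Xint c" by (auto simp: Xsym_iff Xint_def)
        then show ?thesis using \<open>x \<in> Xsym c\<close> True by (simp add: K_def Ph_v evenext_def)
      next
        case False
        with \<open>x \<in> Xsym c\<close> have x: "x \<notin> Xint c" "- x \<in> Xint c" "-x \<in> Xsym c" by (auto simp: Xsym_iff Xint_def)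
        have pn: "Ph k x = (if even k then Ph k (-x) else - Ph k (-x))" for k
          using Ph_neg[OF x(3), of k] by simp
        have "Ph n x * Ph m x = e * (v n (-x) * v m (-x))"
          unfolding pn e_def using Ph_v[OF x(2)] by auto
        moreover have "evenext W x = W (-x)" using False by (simp add: evenext_def)
        ultimately show ?thesis using True x by (simp add: K_def)
      qed
    next
      case False
      then have "x \<notin> Xint c" "- x \<notin> Xint c" using Xint_Xsym[of x c] Xint_Xsym[of "-x" c] by auto
      then show ?thesis using False by (simp add: K_def)
    qed
  qed
  have intK': "integrable lborel (\<lambda>x. K (- x))" and valK': "(\<integral>x. K (- x) \<partial>lborel) = integral\<^sup>L lborel K"
    using lborel_reflect[OF intK] by auto
  show "integrable lborel (\<lambda>x. indicator (Xsym c) x * evenext W x * (Ph n x * Ph m x))"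
    unfolding G using intK intK' by auto
  have "(\<integral>x. indicator (Xsym c) x * evenext W x * (Ph n x * Ph m x) \<partial>lborel) = (1 + e) * integral\<^sup>L lborel K"
    unfolding G using intK intK' valK' by (simp add: algebra_simps)
  also have "\<dots> = (if n = m then 1 else 0)"
  proof (cases "even n \<longleftrightarrow> even m")
    case True
    then show ?thesis unfolding valK using v_ip[OF True] by (simp add: e_def)
  next
    case False
    then have "n \<noteq> m" by auto
    then show ?thesis using False by (simp add: e_def)
  qed
  finally show "(\<integral>x. indicator (Xsym c) x * evenext W x * (Ph n x * Ph m x) \<partial>lborel) = (if n = m then 1 else 0)" .
qed


lemma r_nonneg: "r k \<ge> 0"
  using r_pos[of k] r0 by (cases "k = 0") auto

lemma sc_fl: "sc n * sc (fl n) = - r ((n + 1) div 2)"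
proof (cases "even n")
  case True
  show ?thesis
  proof (cases "n = 0")
    case True then show ?thesis by (simp add: sc_def fl_def r0)
  next
    case False
    with \<open>even n\<close> have "fl n = n - 1" "odd (n - 1)" "(n - 1 + 1) div 2 = n div 2" "(n + 1) div 2 = n div 2"
      by (auto simp: fl_def elim!: evenE)
    then show ?thesis using \<open>even n\<close> r_nonneg[of "n div 2"] by (simp add: sc_def)
  qed
next
  case False
  then have "fl n = n + 1" "even (n + 1)" "(n + 1) div 2 = (n + 1) div 2" by (auto simp: fl_def odd_pos)
  then show ?thesis using False r_nonneg[of "(n + 1) div 2"] by (simp add: sc_def)
qed

lemma sc_zero: "r ((n + 1) div 2) = 0 \<Longrightarrow> sc n = 0"
  by (auto simp: sc_def elim!: evenE oddE)

lemma cont_Ph: "continuous_on (Xsym c) (Ph n)"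
  using Ph_deriv by (intro continuous_at_imp_continuous_on) (auto dest: DERIV_isCont)

lemma cont_eW: "continuous_on (Xsym c) (evenext W)"
  using evenext_deriv[OF dW[OF Xsym_abs] Xsym_nz]
  by (intro continuous_at_imp_continuous_on) (auto dest: DERIV_isCont)

lemma eW_pos: "x \<in> Xsym c \<Longrightarrow> evenext W x > 0"
  using W_pos Xsym_abs by (auto simp: evenext_def)

end

lemma meas_coord:
  assumes "continuous_on (Xsym c) f" "i < d"
  shows "(\<lambda>x. f (x i)) \<in> borel_measurable (restrict_space (PiM {..<d} (\<lambda>_. lborel)) (Xd c d))"
proof -
  have 1: "(\<lambda>x. x i) \<in> measurable (restrict_space (PiM {..<d} (\<lambda>_. lborel)) (Xd c d)) (restrict_space lborel (Xsym c))"
    by (rule measurable_restrict_space3[OF measurable_component_singleton]) (use assms in \<open>auto simp: Xd_def\<close>)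
  have "f \<in> borel_measurable (restrict_space borel (Xsym c))"
    by (rule borel_measurable_continuous_on_restrict[OF assms(1)])
  then have 2: "f \<in> borel_measurable (restrict_space lborel (Xsym c))"
    by (subst measurable_cong_sets[OF sets_restrict_space_cong[OF sets_lborel] refl])
  show ?thesis using measurable_comp[OF 1 2] by (simp add: comp_def)
qed

lemma Xd_sets: "Xd c d \<in> sets (PiM {..<d} (\<lambda>_. lborel))"
proof -
  have "open (Xsym c)" by (rule open_Xsym)
  then show ?thesis unfolding Xd_def by (intro sets_PiM_I_finite) auto
qed

lemma space_Pi_lborel: "space (PiM {..<d} (\<lambda>_. lborel :: real measure)) = {..<d} \<rightarrow>\<^sub>E UNIV"
  by (simp add: space_PiM)

lemma indicator_Xd:
  assumes "x \<in> space (PiM {..<d} (\<lambda>_. lborel :: real measure))"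
  shows "indicator (Xd c d) x = (\<Prod>i<d. indicator (Xsym c) (x i) :: real)"
proof (cases "\<forall>i<d. x i \<in> Xsym c")
  case True
  then have "x \<in> Xd c d" using assms by (auto simp: Xd_def space_PiM PiE_def)
  then show ?thesis using True by simp
next
  case False
  then obtain i where "i < d" "x i \<notin> Xsym c" by auto
  then have "x \<notin> Xd c d" by (auto simp: Xd_def)
  moreover have "(\<Prod>i<d. indicator (Xsym c) (x i) :: real) = 0"
    using \<open>i < d\<close> \<open>x i \<notin> Xsym c\<close> by (intro prod_zero bexI[of _ i]) auto
  ultimately show ?thesis by simp
qed

interpretation lbprod: product_sigma_finite "\<lambda>_::nat. lborel :: real measure"
  by unfold_locales

locale multiD =
  fixes d :: nat and c :: ereal and w p q :: "nat \<Rightarrow> real \<Rightarrow> real" and a :: "nat \<Rightarrow> real"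
    and phi :: "nat \<Rightarrow> nat \<Rightarrow> real \<Rightarrow> real" and lam :: "nat \<Rightarrow> nat \<Rightarrow> real"
  assumes one: "\<And>i. i < d \<Longrightarrow> oneD c (w i) (p i) (q i) (a i) (phi i) (lam i)"
    and a_nn: "\<And>i. i < d \<Longrightarrow> a i \<ge> 0"
begin

abbreviation PhD where "PhD n \<equiv> PhiD d p q a phi lam n"
abbreviation Ph1 where "Ph1 i k \<equiv> Phi1 (p i) (q i) (a i) (phi i) (lam i) k"

lemma cont_Ph1: "i < d \<Longrightarrow> continuous_on (Xsym c) (Ph1 i k)"
  using oneD.cont_Ph[OF one] by blast

lemma cont_eW1: "i < d \<Longrightarrow> continuous_on (Xsym c) (evenext (w i))"
  using oneD.cont_eW[OF one] by blast


lemma eW_pos1: "i < d \<Longrightarrow> t \<in> Xsym c \<Longrightarrow> 0 < evenext (w i) t"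
  using oneD.eW_pos[OF one] by blast

lemma sym_ip1: "i < d \<Longrightarrow> (\<integral>t. indicator (Xsym c) t * evenext (w i) t * (Ph1 i k t * Ph1 i l t) \<partial>lborel) = (if k = l then 1 else 0)"
  using oneD.sym_ip(2)[OF one] by blast

lemma ipD:
  assumes n: "n \<in> Nd d" and m: "m \<in> Nd d"
  shows "integrable (muD c d w) (\<lambda>x. PhD n x * PhD m x)"
    "ip (muD c d w) (PhD n) (PhD m) = (if n = m then 1 else 0)"
proof -
  define B where "B = PiM {..<d} (\<lambda>_. lborel :: real measure)"
  define R where "R = restrict_space B (Xd c d)"
  define g where "g x = (\<Prod>i<d. evenext (w i) (x i))" for x :: "nat \<Rightarrow> real"
  define F where "F x = PhD n x * PhD m x" for x
  define f where "f i t = indicator (Xsym c) t * evenext (w i) t * (Ph1 i (n i) t * Ph1 i (m i) t)" for i t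
  have mc: "(\<lambda>x. Ph1 i k (x i)) \<in> borel_measurable R" if "i \<in> {..<d}" for i k
    using meas_coord[OF cont_Ph1] that unfolding R_def B_def by simp
  have mw: "(\<lambda>x. evenext (w i) (x i)) \<in> borel_measurable R" if "i \<in> {..<d}" for i
    using meas_coord[OF cont_eW1] that unfolding R_def B_def by simp
  have Fm: "F \<in> borel_measurable R"
    unfolding F_def PhiD_def
    by (intro borel_measurable_times borel_measurable_prod mc)
  have gm: "g \<in> borel_measurable R"
    unfolding g_def by (intro borel_measurable_prod mw)
  have spR: "space R = Xd c d" unfolding R_def B_def
    by (auto simp: space_restrict_space space_PiM Xd_def)
  have gnn: "AE x in R. 0 \<le> g x"
  proof (rule AE_I2)
    fix x assume "x \<in> space R"
    then have "\<forall>i<d. x i \<in> Xsym c" by (auto simp: spR Xd_def PiE_iff)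
    then show "0 \<le> g x" unfolding g_def by (intro prod_nonneg) (simp add: eW_pos1 less_imp_le)
  qed
  have XdB: "Xd c d \<inter> space B \<in> sets B"
  proof -
    have "Xd c d \<subseteq> space B" by (auto simp: B_def space_PiM Xd_def)
    then show ?thesis using Xd_sets by (simp add: B_def Int_absorb2)
  qed
  have mu: "muD c d w = density R g" unfolding muD_def R_def B_def g_def by simp
  have eqB: "\<And>x. x \<in> space B \<Longrightarrow> indicator (Xd c d) x *\<^sub>R (g x *\<^sub>R F x) = (\<Prod>i<d. f i (x i))"
  proof -
    fix x assume x: "x \<in> space B"
    have ind: "indicator (Xd c d) x = (\<Prod>i<d. indicator (Xsym c) (x i) :: real)"
      by (rule indicator_Xd) (use x in \<open>simp add: B_def\<close>)
    have "(\<Prod>i<d. f i (x i)) = (\<Prod>i<d. indicator (Xsym c) (x i)) * (\<Prod>i<d. evenext (w i) (x i))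
       * ((\<Prod>i<d. Ph1 i (n i) (x i)) * (\<Prod>i<d. Ph1 i (m i) (x i)))"
      unfolding f_def by (simp only: prod.distrib)
    then show "indicator (Xd c d) x *\<^sub>R (g x *\<^sub>R F x) = (\<Prod>i<d. f i (x i))"
      unfolding ind g_def F_def PhiD_def by (simp only: real_scaleR_def mult.assoc)
  qed
  have intf: "\<And>i. i \<in> {..<d} \<Longrightarrow> integrable lborel (f i)"
    unfolding f_def using oneD.sym_ip(1)[OF one] by auto
  have intP: "integrable B (\<lambda>x. \<Prod>i<d. f i (x i))"
    unfolding B_def by (rule lbprod.product_integrable_prod) (use intf in auto)
  have "integrable B (\<lambda>x. indicator (Xd c d) x *\<^sub>R (g x *\<^sub>R F x))"
    using intP by (rule Bochner_Integration.integrable_cong[THEN iffD2, OF refl, rotated]) (use eqB in auto)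
  then show "integrable (muD c d w) (\<lambda>x. PhD n x * PhD m x)"
    unfolding mu R_def using integrable_density[OF Fm[unfolded R_def] gm[unfolded R_def] gnn[unfolded R_def]]
    by (simp add: F_def[abs_def] integrable_restrict_space[OF XdB])
  have "ip (muD c d w) (PhD n) (PhD m) = integral\<^sup>L R (\<lambda>x. g x *\<^sub>R F x)"
    unfolding ip_def mu using integral_density[OF Fm gm gnn] by (simp add: F_def[abs_def])
  also have "\<dots> = integral\<^sup>L B (\<lambda>x. indicator (Xd c d) x *\<^sub>R (g x *\<^sub>R F x))"
    unfolding R_def by (rule integral_restrict_space[OF XdB])
  also have "\<dots> = integral\<^sup>L B (\<lambda>x. \<Prod>i<d. f i (x i))"
    by (rule Bochner_Integration.integral_cong) (use eqB in auto)
  also have "\<dots> = (\<Prod>i<d. integral\<^sup>L lborel (f i))"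
    unfolding B_def by (rule lbprod.product_integral_prod) (use intf in auto)
  also have "\<dots> = (\<Prod>i<d. if n i = m i then 1 else 0)"
    by (rule prod.cong) (auto simp: f_def[abs_def] sym_ip1)
  also have "\<dots> = (if n = m then 1 else 0)"
  proof (cases "n = m")
    case True then show ?thesis by simp
  next
    case False
    then obtain i where "n i \<noteq> m i" by auto
    moreover have "i < d"
    proof (rule ccontr)
      assume "\<not> i < d" then have "n i = m i" using n m by (auto simp: Nd_def PiE_def extensional_def)
      with \<open>n i \<noteq> m i\<close> show False by simp
    qed
    ultimately show ?thesis using False by (intro trans[OF prod_zero]) auto
  qed
  finally show "ip (muD c d w) (PhD n) (PhD m) = (if n = m then 1 else 0)" .
qed



definition S where "S j n = oneD.sc (a j) (lam j) (n j)"
definition flipj where "flipj j n = n(j := fl (n j))"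

lemma D1_Ph1: "j < d \<Longrightarrow> t \<in> Xsym c \<Longrightarrow> D1 (w j) (p j) (q j) (Ph1 j k) t = oneD.sc (a j) (lam j) k * Ph1 j (fl k) t"
  using oneD.D1_Ph[OF one] by blast

lemma Ph1_deriv: "j < d \<Longrightarrow> t \<in> Xsym c \<Longrightarrow> Ph1 j k field_differentiable (at t)"
  using oneD.Ph_deriv[OF one] field_differentiable_def by (metis has_field_derivative_def)

lemma PhD_upd: "j < d \<Longrightarrow> PhD n (x(j := s)) = Ph1 j (n j) s * (\<Prod>i\<in>{..<d}-{j}. Ph1 i (n i) (x i))"
  unfolding PhiD_def by (subst prod.remove[of _ j]) (auto intro!: prod.cong)

lemma flipj_Nd: "n \<in> Nd d \<Longrightarrow> j < d \<Longrightarrow> flipj j n \<in> Nd d"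
  by (auto simp: Nd_def flipj_def PiE_def extensional_def)

lemma Xd_upd: "x \<in> Xd c d \<Longrightarrow> s \<in> Xsym c \<Longrightarrow> j < d \<Longrightarrow> x(j := s) \<in> Xd c d"
  by (auto simp: Xd_def PiE_def extensional_def)

lemma DD_combo:
  assumes G: "finite G" and x: "x \<in> Xd c d" and j: "j < d"
    and g: "\<And>y. y \<in> Xd c d \<Longrightarrow> g y = (\<Sum>k\<in>G. b k * PhD (hh k) y)"
  shows "DD w p q j g x = (\<Sum>k\<in>G. b k * (S j (hh k) * PhD (flipj j (hh k)) x))"
proof -
  define C where "C k = (\<Prod>i\<in>{..<d}-{j}. Ph1 i (hh k i) (x i))" for k
  have xj: "x j \<in> Xsym c" using x j by (auto simp: Xd_def)
  have "DD w p q j g x = D1 (w j) (p j) (q j) (\<lambda>s. g (x(j := s))) (x j)" by (rule DD_eq_D1)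
  also have "\<dots> = D1 (w j) (p j) (q j) (\<lambda>s. \<Sum>k\<in>G. (b k * C k) * Ph1 j (hh k j) s) (x j)"
  proof (rule D1_cong[OF open_Xsym xj])
    show "- x j \<in> Xsym c" using xj by simp
    fix s assume s: "s \<in> Xsym c"
    show "g (x(j := s)) = (\<Sum>k\<in>G. (b k * C k) * Ph1 j (hh k j) s)"
      using g[OF Xd_upd[OF x s j]] by (simp add: PhD_upd[OF j] C_def mult_ac)
  qed
  also have "\<dots> = (\<Sum>k\<in>G. (b k * C k) * D1 (w j) (p j) (q j) (Ph1 j (hh k j)) (x j))"
    by (rule D1_sum[OF G, where u'="\<lambda>k. deriv (Ph1 j (hh k j)) (x j)"])
       (use Ph1_deriv[OF j xj] in \<open>auto simp: DERIV_deriv_iff_field_differentiable\<close>)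
  also have "\<dots> = (\<Sum>k\<in>G. b k * (S j (hh k) * PhD (flipj j (hh k)) x))"
  proof (rule sum.cong[OF refl])
    fix k assume "k \<in> G"
    have "PhD (flipj j (hh k)) x = PhD (flipj j (hh k)) (x(j := x j))" by simp
    also have "\<dots> = Ph1 j (fl (hh k j)) (x j) * C k"
      unfolding PhD_upd[OF j] C_def by (simp add: flipj_def)
    finally show "(b k * C k) * D1 (w j) (p j) (q j) (Ph1 j (hh k j)) (x j) = b k * (S j (hh k) * PhD (flipj j (hh k)) x)"
      by (simp add: D1_Ph1[OF j xj] S_def)
  qed
  finally show ?thesis .
qed


abbreviation L where "L \<equiv> lamD d lam"
abbreviation AA where "AA \<equiv> (\<Sum>i<d. a i)"

lemma rdef1: "j < d \<Longrightarrow> oneD.r (a j) (lam j) k = lam j k - a j"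
  using oneD.r_def[OF one] by blast

lemma lam_ge: "j < d \<Longrightarrow> a j \<le> lam j k"
  using oneD.r_nonneg[OF one] rdef1 by fastforce

lemma SS: "j < d \<Longrightarrow> S j n * S j (flipj j n) = - (lam j ((n j + 1) div 2) - a j)"
  using oneD.sc_fl[OF one] rdef1 by (simp add: S_def flipj_def)

lemma sumSS: "(\<Sum>j<d. S j n * S j (flipj j n)) = AA - L n"
  by (simp add: SS lamD_def sum_subtractf)

lemma L_ge: "L n \<ge> AA"
  unfolding lamD_def by (intro sum_mono lam_ge) auto

lemma AA_nn: "AA \<ge> 0"
  by (intro sum_nonneg a_nn) auto

lemma L_nn: "L n \<ge> 0"
  using L_ge[of n] AA_nn by linarith

lemma L_flip: "lamD d lam (flipj j n) = lamD d lam n"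
  unfolding lamD_def flipj_def by (intro sum.cong) auto

lemma S_zero:
  assumes "L n = 0" "j < d"
  shows "S j n = 0"
proof -
  have nn: "\<forall>i\<in>{..<d}. 0 \<le> lam i ((n i + 1) div 2)"
    using lam_ge a_nn by (meson lessThan_iff order_trans)
  have "\<forall>i\<in>{..<d}. lam i ((n i + 1) div 2) = 0"
    using assms(1) sum_nonneg_eq_0_iff[of "{..<d}" "\<lambda>i. lam i ((n i + 1) div 2)"] nn unfolding lamD_def by blast
  then have "lam j ((n j + 1) div 2) = 0" using assms(2) by auto
  moreover have "a j \<le> lam j ((n j + 1) div 2)" "a j \<ge> 0" using lam_ge a_nn assms(2) by auto
  ultimately have "oneD.r (a j) (lam j) ((n j + 1) div 2) = 0" using rdef1[OF assms(2)] by simp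
  then show ?thesis unfolding S_def using oneD.sc_zero[OF one[OF assms(2)]] by blast
qed

lemma DD_Phi: "x \<in> Xd c d \<Longrightarrow> j < d \<Longrightarrow> DD w p q j (PhD n) x = S j n * PhD (flipj j n) x"
  using DD_combo[of "{n}" x j "PhD n" "\<lambda>_. 1" id] by simp

lemma space_muD: "space (muD c d w) = Xd c d"
  by (auto simp: muD_def space_restrict_space space_PiM Xd_def)

lemma coef_combo:
  assumes G: "finite G" and hG: "\<And>k. k \<in> G \<Longrightarrow> hh k \<in> Nd d"
    and g: "\<And>y. y \<in> Xd c d \<Longrightarrow> g y = (\<Sum>k\<in>G. b k * PhD (hh k) y)" and m: "m \<in> Nd d"
  shows "coef (muD c d w) (PhiD d p q a phi lam) g m = (\<Sum>k\<in>G. if hh k = m then b k else 0)"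
proof -
  have "coef (muD c d w) (PhiD d p q a phi lam) g m = (\<integral>x. (\<Sum>k\<in>G. b k * (PhD (hh k) x * PhD m x)) \<partial>muD c d w)"
    unfolding coef_def ip_def
    by (rule Bochner_Integration.integral_cong) (auto simp: space_muD g sum_distrib_right mult.assoc)
  also have "\<dots> = (\<Sum>k\<in>G. b k * ip (muD c d w) (PhD (hh k)) (PhD m))"
    unfolding ip_def
    by (subst Bochner_Integration.integral_sum) (auto intro!: ipD(1)[OF hG m])
  also have "\<dots> = (\<Sum>k\<in>G. if hh k = m then b k else 0)"
    by (intro sum.cong refl) (simp add: ipD(2)[OF hG m])
  finally show ?thesis .
qed

lemma Pop_combo:
  assumes G: "finite G" and hG: "\<And>k. k \<in> G \<Longrightarrow> hh k \<in> Nd d"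
    and g: "\<And>y. y \<in> Xd c d \<Longrightarrow> g y = (\<Sum>k\<in>G. b k * PhD (hh k) y)"
  shows "Pop (muD c d w) (Nd d) (PhiD d p q a phi lam) L t g x
     = (\<Sum>k\<in>G. b k * (exp (- t * sqrt (L (hh k))) * PhD (hh k) x))"
proof -
  have "Pop (muD c d w) (Nd d) (PhiD d p q a phi lam) L t g x
      = (\<Sum>\<^sub>\<infinity>n\<in>Nd d. (exp (- t * sqrt (L n)) * PhD n x) * (\<Sum>k\<in>G. if hh k = n then b k else 0))"
    unfolding Pop_def by (rule infsum_cong) (simp add: coef_combo[OF G hG g] mult_ac)
  also have "\<dots> = (\<Sum>k\<in>G. b k * (exp (- t * sqrt (L (hh k))) * PhD (hh k) x))"
    by (subst infsum_combo[OF G]) (auto intro!: sum.cong simp: hG)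
  finally show ?thesis .
qed

lemma Rop_combo:
  assumes G: "finite G" and hG: "\<And>k. k \<in> G \<Longrightarrow> hh k \<in> Nd d"
    and g: "\<And>y. y \<in> Xd c d \<Longrightarrow> g y = (\<Sum>k\<in>G. b k * PhD (hh k) y)"
  shows "Rop (muD c d w) (Nd d) (PhiD d p q a phi lam) L D g x
     = (\<Sum>k\<in>G. if L (hh k) \<noteq> 0 then b k * (L (hh k) powr (-1/2) * D (PhD (hh k)) x) else 0)"
proof -
  have "Rop (muD c d w) (Nd d) (PhiD d p q a phi lam) L D g x
      = (\<Sum>\<^sub>\<infinity>n\<in>{n \<in> Nd d. L n \<noteq> 0}. (L n powr (-1/2) * D (PhD n) x) * (\<Sum>k\<in>G. if hh k = n then b k else 0))"
    unfolding Rop_def by (rule infsum_cong) (simp add: coef_combo[OF G hG g] mult_ac)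
  also have "\<dots> = (\<Sum>k\<in>G. if L (hh k) \<noteq> 0 then b k * (L (hh k) powr (-1/2) * D (PhD (hh k)) x) else 0)"
    by (subst infsum_combo[OF G]) (auto intro!: sum.cong simp: hG)
  finally show ?thesis .
qed

lemma LinvPi_combo:
  assumes G: "finite G" and hG: "\<And>k. k \<in> G \<Longrightarrow> hh k \<in> Nd d"
    and g: "\<And>y. y \<in> Xd c d \<Longrightarrow> g y = (\<Sum>k\<in>G. b k * PhD (hh k) y)"
  shows "LinvPi (muD c d w) (Nd d) (PhiD d p q a phi lam) L g x
     = (\<Sum>k\<in>G. if L (hh k) \<noteq> 0 then b k * ((1 / L (hh k)) * PhD (hh k) x) else 0)"
proof -
  have "LinvPi (muD c d w) (Nd d) (PhiD d p q a phi lam) L g x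
      = (\<Sum>\<^sub>\<infinity>n\<in>{n \<in> Nd d. L n \<noteq> 0}. ((1 / L n) * PhD n x) * (\<Sum>k\<in>G. if hh k = n then b k else 0))"
    unfolding LinvPi_def by (rule infsum_cong) (simp add: coef_combo[OF G hG g] mult_ac)
  also have "\<dots> = (\<Sum>k\<in>G. if L (hh k) \<noteq> 0 then b k * ((1 / L (hh k)) * PhD (hh k) x) else 0)"
    by (subst infsum_combo[OF G]) (auto intro!: sum.cong simp: hG)
  finally show ?thesis .
qed


lemma exp_deriv: "((\<lambda>s. exp (- s * z)) has_real_derivative (- z) * exp (- t * z)) (at t)"
  by (auto intro!: derivative_eq_intros)

lemma flipj_flipj[simp]: "flipj j (flipj j n) = n"
  by (simp add: flipj_def)

lemma DD_twice:
  assumes G: "finite G" and x: "x \<in> Xd c d" and i: "i < d"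
    and g: "\<And>y. y \<in> Xd c d \<Longrightarrow> g y = (\<Sum>k\<in>G. b k * PhD (hh k) y)"
  shows "DD w p q i (DD w p q i g) x = (\<Sum>k\<in>G. b k * (S i (hh k) * S i (flipj i (hh k))) * PhD (hh k) x)"
proof -
  have g1: "DD w p q i g y = (\<Sum>k\<in>G. (b k * S i (hh k)) * PhD (flipj i (hh k)) y)" if "y \<in> Xd c d" for y
    using DD_combo[OF G that i g] by (simp add: mult.assoc)
  show ?thesis
    using DD_combo[OF G x i g1] by (simp add: mult_ac)
qed

lemma wave:
  fixes \<beta> :: "'k \<Rightarrow> real" and hh :: "'k \<Rightarrow> nat \<Rightarrow> nat"
  assumes G: "finite G" and x: "x \<in> Xd c d"
  defines "V \<equiv> \<lambda>s y. \<Sum>k\<in>G. \<beta> k * (exp (- s * sqrt (L (hh k))) * PhD (hh k) y)"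
  shows "((\<lambda>s. V s x) has_real_derivative deriv (\<lambda>s. V s x) t) (at t)"
    "(deriv (\<lambda>s. V s x) has_real_derivative LLop d w p q AA (V t) x) (at t)"
proof -
  define V1 where "V1 s = (\<Sum>k\<in>G. \<beta> k * ((- sqrt (L (hh k))) * exp (- s * sqrt (L (hh k))) * PhD (hh k) x))" for s
  define V2 where "V2 s = (\<Sum>k\<in>G. \<beta> k * (L (hh k) * exp (- s * sqrt (L (hh k))) * PhD (hh k) x))" for s
  have d1: "((\<lambda>s. V s x) has_real_derivative V1 s) (at s)" for s
    unfolding V_def V1_def
    by (intro DERIV_sum DERIV_cmult DERIV_cmult_right exp_deriv) 
  have dV: "deriv (\<lambda>s. V s x) = V1" using d1 DERIV_imp_deriv by blast
  show "((\<lambda>s. V s x) has_real_derivative deriv (\<lambda>s. V s x) t) (at t)" using d1 dV by simp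
  have "(V1 has_real_derivative (\<Sum>k\<in>G. \<beta> k * ((- sqrt (L (hh k))) * ((- sqrt (L (hh k))) * exp (- t * sqrt (L (hh k)))) * PhD (hh k) x))) (at t)"
    unfolding V1_def
    by (intro DERIV_sum DERIV_cmult DERIV_cmult_right exp_deriv)
  moreover have "(\<Sum>k\<in>G. \<beta> k * ((- sqrt (L (hh k))) * ((- sqrt (L (hh k))) * exp (- t * sqrt (L (hh k)))) * PhD (hh k) x)) = V2 t"
    unfolding V2_def by (intro sum.cong refl) (simp add: L_nn)
  ultimately have d2: "(V1 has_real_derivative V2 t) (at t)" by simp
  have Vt: "V t y = (\<Sum>k\<in>G. (\<beta> k * exp (- t * sqrt (L (hh k)))) * PhD (hh k) y)" for y
    unfolding V_def by (simp add: mult.assoc)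
  have "LLop d w p q AA (V t) x = AA * V t x - (\<Sum>i<d. \<Sum>k\<in>G. (\<beta> k * exp (- t * sqrt (L (hh k)))) * (S i (hh k) * S i (flipj i (hh k))) * PhD (hh k) x)"
    unfolding LLop_def by (intro arg_cong2[where f="(-)"] refl sum.cong) (auto intro!: DD_twice[OF G x] simp: Vt)
  also have "\<dots> = (\<Sum>k\<in>G. (\<beta> k * exp (- t * sqrt (L (hh k)))) * PhD (hh k) x * (AA - (\<Sum>i<d. S i (hh k) * S i (flipj i (hh k)))))"
    unfolding V_def by (subst sum.swap) (simp add: sum_distrib_left sum_distrib_right sum_subtractf[symmetric] algebra_simps)
  also have "\<dots> = V2 t"
    unfolding V2_def sumSS by (intro sum.cong refl) (simp add: algebra_simps)
  finally show "(deriv (\<lambda>s. V s x) has_real_derivative LLop d w p q AA (V t) x) (at t)"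
    using d2 dV by simp
qed


end

lemma powr_mhalf: "(t::real) > 0 \<Longrightarrow> t powr (-1/2) = 1 / sqrt t"
proof -
  assume t: "t > 0"
  have "t powr (-1/2) = t powr (-(1/2))" by simp
  also have "\<dots> = inverse (t powr (1/2))" by (rule powr_minus)
  also have "\<dots> = 1 / sqrt t" using powr_half_sqrt[of t] t by (simp add: inverse_eq_divide)
  finally show ?thesis .
qed


lemma powr_mhalf': "(t::real) > 0 \<Longrightarrow> t powr - (1/2) = 1 / sqrt t"
  using powr_mhalf by simp

lemma comb_lin: "(\<Sum>k\<in>G. (c1 k::real) * u k) - A * (\<Sum>k\<in>G. c2 k * u k) = (\<Sum>k\<in>G. (c1 k - A * c2 k) * u k)"
  by (simp add: sum_distrib_left sum_subtractf[symmetric] algebra_simps)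

locale multiF = multiD +
  fixes F :: "(nat \<Rightarrow> nat) set" and cf :: "(nat \<Rightarrow> nat) \<Rightarrow> real" and f :: "(nat \<Rightarrow> real) \<Rightarrow> real"
  assumes F: "finite F" and FN: "F \<subseteq> Nd d"
    and f_eq: "\<And>y. y \<in> Xd c d \<Longrightarrow> f y = (\<Sum>n\<in>F. cf n * PhD n y)"
begin

definition bb where "bb j n = (if L n \<noteq> 0 then cf n * (L n powr (-1/2) * S j n) else 0)"

lemma FN': "n \<in> F \<Longrightarrow> n \<in> Nd d" using FN by auto

lemma fP: "PP c d w p q a phi lam t f x = (\<Sum>n\<in>F. cf n * (exp (- t * sqrt (L n)) * PhD n x))"
proof -
  have h1: "\<And>k. k \<in> F \<Longrightarrow> id k \<in> Nd d" using FN' by simp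
  have h2: "\<And>y. y \<in> Xd c d \<Longrightarrow> f y = (\<Sum>k\<in>F. cf k * PhD (id k) y)" using f_eq by simp
  show ?thesis unfolding PP_def using Pop_combo[OF F h1 h2, of t x] by simp
qed

lemma fR: "j < d \<Longrightarrow> y \<in> Xd c d \<Longrightarrow> RR c d w p q a phi lam j f y = (\<Sum>n\<in>F. bb j n * PhD (flipj j n) y)"
proof -
  assume j: "j < d" and y: "y \<in> Xd c d"
  have h1: "\<And>k. k \<in> F \<Longrightarrow> id k \<in> Nd d" using FN' by simp
  have h2: "\<And>y. y \<in> Xd c d \<Longrightarrow> f y = (\<Sum>k\<in>F. cf k * PhD (id k) y)" using f_eq by simp
  have "Rop (muD c d w) (Nd d) (PhiD d p q a phi lam) L (DD w p q j) f y
     = (\<Sum>k\<in>F. if L (id k) \<noteq> 0 then cf k * (L (id k) powr (-1/2) * DD w p q j (PhD (id k)) y) else 0)"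
    by (rule Rop_combo[OF F h1 h2])
  also have "\<dots> = (\<Sum>n\<in>F. bb j n * PhD (flipj j n) y)"
    by (intro sum.cong refl) (simp add: DD_Phi[OF y j] bb_def)
  finally show ?thesis unfolding RR_def .
qed

lemma fU: "j < d \<Longrightarrow> UU c d w p q a phi lam t j f x = (\<Sum>n\<in>F. bb j n * (exp (- t * sqrt (L n)) * PhD (flipj j n) x))"
proof -
  assume j: "j < d"
  have h1: "\<And>k. k \<in> F \<Longrightarrow> flipj j k \<in> Nd d" using FN' flipj_Nd j by blast
  have h2: "\<And>y. y \<in> Xd c d \<Longrightarrow> RR c d w p q a phi lam j f y = (\<Sum>k\<in>F. bb j k * PhD (flipj j k) y)"
    using fR[OF j] by blast
  have "Pop (muD c d w) (Nd d) (PhiD d p q a phi lam) L t (RR c d w p q a phi lam j f) x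
     = (\<Sum>k\<in>F. bb j k * (exp (- t * sqrt (L (flipj j k))) * PhD (flipj j k) x))"
    by (rule Pop_combo[OF F h1 h2])
  then show ?thesis unfolding UU_def PP_def by (simp add: L_flip)
qed


abbreviation EE where "EE t n \<equiv> exp (- t * sqrt (L n))"

lemma gU: "j < d \<Longrightarrow> UU c d w p q a phi lam t j f y = (\<Sum>n\<in>F. (bb j n * EE t n) * PhD (flipj j n) y)"
  using fU by (simp add: mult.assoc)

lemma gP: "PP c d w p q a phi lam t f y = (\<Sum>n\<in>F. (cf n * EE t n) * PhD (id n) y)"
  using fP by (simp add: mult.assoc)

lemma DU: "i < d \<Longrightarrow> j < d \<Longrightarrow> x \<in> Xd c d \<Longrightarrow> DD w p q i (UU c d w p q a phi lam t j f) x
   = (\<Sum>n\<in>F. (bb j n * EE t n) * (S i (flipj j n) * PhD (flipj i (flipj j n)) x))"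
  by (rule DD_combo[OF F]) (auto simp: gU)

lemma claim_i:
  assumes i: "i < d" and j: "j < d" and x: "x \<in> Xd c d"
  shows "DD w p q i (UU c d w p q a phi lam t j f) x = DD w p q j (UU c d w p q a phi lam t i f) x"
proof (cases "i = j")
  case True then show ?thesis by simp
next
  case False
  show ?thesis unfolding DU[OF i j x] DU[OF j i x]
  proof (intro sum.cong refl)
    fix n
    have 1: "S i (flipj j n) = S i n" "S j (flipj i n) = S j n" using False by (auto simp: S_def flipj_def)
    have 2: "flipj i (flipj j n) = flipj j (flipj i n)" using False by (auto simp: flipj_def fun_upd_twist)
    have 3: "bb j n * S i n = bb i n * S j n" by (simp add: bb_def)
    show "bb j n * EE t n * (S i (flipj j n) * PhD (flipj i (flipj j n)) x) =
          bb i n * EE t n * (S j (flipj i n) * PhD (flipj j (flipj i n)) x)"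
      unfolding 1 2 using 3 by (simp add: mult_ac)
  qed
qed

lemma deriv_combo:
  fixes \<beta> :: "(nat \<Rightarrow> nat) \<Rightarrow> real" and hh :: "(nat \<Rightarrow> nat) \<Rightarrow> nat \<Rightarrow> nat"
  shows "((\<lambda>s. \<Sum>n\<in>F. \<beta> n * (exp (- s * sqrt (L n)) * PhD (hh n) x)) has_real_derivative
      (\<Sum>n\<in>F. \<beta> n * ((- sqrt (L n)) * exp (- t * sqrt (L n)) * PhD (hh n) x))) (at t)"
  by (intro DERIV_sum DERIV_cmult DERIV_cmult_right exp_deriv)

lemma claim_ii:
  assumes j: "j < d" and x: "x \<in> Xd c d"
  shows "((\<lambda>s. UU c d w p q a phi lam s j f x) has_real_derivative
            - DD w p q j (PP c d w p q a phi lam t f) x) (at t)"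
proof -
  have e: "(\<lambda>s. UU c d w p q a phi lam s j f x) = (\<lambda>s. \<Sum>n\<in>F. bb j n * (exp (- s * sqrt (L n)) * PhD (flipj j n) x))"
    using fU[OF j] by auto
  have DP: "DD w p q j (PP c d w p q a phi lam t f) x = (\<Sum>n\<in>F. (cf n * EE t n) * (S j (id n) * PhD (flipj j (id n)) x))"
    by (rule DD_combo[OF F x j]) (simp add: gP)
  have "(\<Sum>n\<in>F. bb j n * ((- sqrt (L n)) * exp (- t * sqrt (L n)) * PhD (flipj j n) x))
      = - DD w p q j (PP c d w p q a phi lam t f) x"
    unfolding DP sum_negf[symmetric]
  proof (intro sum.cong refl)
    fix n
    show "bb j n * ((- sqrt (L n)) * exp (- t * sqrt (L n)) * PhD (flipj j n) x)
        = - (cf n * EE t n * (S j (id n) * PhD (flipj j (id n)) x))"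
    proof (cases "L n = 0")
      case True then show ?thesis using S_zero[OF True j] by (simp add: bb_def)
    next
      case False
      then have Lp: "L n > 0" using L_nn[of n] by linarith
      then show ?thesis using False by (simp add: bb_def powr_mhalf')
    qed
  qed
  then show ?thesis unfolding e using deriv_combo[of "bb j" "flipj j" x t] by simp
qed

lemma sumDU: "x \<in> Xd c d \<Longrightarrow> (\<Sum>j<d. DD w p q j (UU c d w p q a phi lam t j f) x)
   = (\<Sum>n\<in>F. (if L n \<noteq> 0 then cf n * L n powr (-1/2) * (AA - L n) else 0) * EE t n * PhD n x)"
proof -
  assume x: "x \<in> Xd c d"
  have "(\<Sum>j<d. DD w p q j (UU c d w p q a phi lam t j f) x)
      = (\<Sum>j<d. \<Sum>n\<in>F. (bb j n * EE t n) * (S j (flipj j n) * PhD n x))"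
    by (intro sum.cong refl) (simp add: DU x)
  also have "\<dots> = (\<Sum>n\<in>F. (\<Sum>j<d. bb j n * S j (flipj j n)) * EE t n * PhD n x)"
    by (subst sum.swap) (simp add: sum_distrib_right sum_distrib_left mult_ac)
  also have "\<dots> = (\<Sum>n\<in>F. (if L n \<noteq> 0 then cf n * L n powr (-1/2) * (AA - L n) else 0) * EE t n * PhD n x)"
  proof (intro sum.cong refl)
    fix n
    have "(\<Sum>j<d. bb j n * S j (flipj j n)) = (if L n \<noteq> 0 then cf n * L n powr (-1/2) * (\<Sum>j<d. S j n * S j (flipj j n)) else 0)"
      by (simp add: bb_def sum_distrib_left mult_ac)
    then show "(\<Sum>j<d. bb j n * S j (flipj j n)) * EE t n * PhD n x = (if L n \<noteq> 0 then cf n * L n powr (-1/2) * (AA - L n) else 0) * EE t n * PhD n x"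
      by (simp add: sumSS)
  qed
  finally show ?thesis .
qed

lemma claim_iii0:
  assumes A0: "AA = 0" and x: "x \<in> Xd c d"
  shows "((\<lambda>s. PP c d w p q a phi lam s f x) has_real_derivative
            (\<Sum>j<d. DD w p q j (UU c d w p q a phi lam t j f) x)) (at t)"
proof -
  have e: "(\<lambda>s. PP c d w p q a phi lam s f x) = (\<lambda>s. \<Sum>n\<in>F. cf n * (exp (- s * sqrt (L n)) * PhD (id n) x))"
    using fP by auto
  have "(\<Sum>n\<in>F. cf n * ((- sqrt (L n)) * exp (- t * sqrt (L n)) * PhD (id n) x))
      = (\<Sum>j<d. DD w p q j (UU c d w p q a phi lam t j f) x)"
    unfolding sumDU[OF x]
  proof (intro sum.cong refl)
    fix n
    show "cf n * ((- sqrt (L n)) * exp (- t * sqrt (L n)) * PhD (id n) x) =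
      (if L n \<noteq> 0 then cf n * L n powr (-1/2) * (AA - L n) else 0) * EE t n * PhD n x"
    proof (cases "L n = 0")
      case True then show ?thesis by simp
    next
      case False
      then have Lp: "L n > 0" using L_nn[of n] by linarith
      have "L n / sqrt (L n) = sqrt (L n)" using Lp by (simp add: real_div_sqrt)
      then show ?thesis using False Lp A0 by (simp add: powr_mhalf' field_simps)
    qed
  qed
  then show ?thesis unfolding e using deriv_combo[of cf id x t] by simp
qed

lemma claim_iii1:
  assumes A0: "AA > 0" and x: "x \<in> Xd c d"
  shows "((\<lambda>s. PP c d w p q a phi lam s (\<lambda>y. f y - AA * LinvPi0 c d w p q a phi lam f y) x) has_real_derivative
            (\<Sum>j<d. DD w p q j (UU c d w p q a phi lam t j f) x)) (at t)"
proof -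
  have Lp: "L n > 0" for n using L_ge[of n] A0 by linarith
  have h1: "\<And>k. k \<in> F \<Longrightarrow> id k \<in> Nd d" using FN' by simp
  have h2: "\<And>y. y \<in> Xd c d \<Longrightarrow> f y = (\<Sum>k\<in>F. cf k * PhD (id k) y)" using f_eq by simp
  have Li: "LinvPi0 c d w p q a phi lam f y = (\<Sum>n\<in>F. (cf n / L n) * PhD (id n) y)" for y
  proof -
    have "LinvPi (muD c d w) (Nd d) (PhiD d p q a phi lam) L f y
       = (\<Sum>k\<in>F. if L (id k) \<noteq> 0 then cf k * ((1 / L (id k)) * PhD (id k) y) else 0)"
      by (rule LinvPi_combo[OF F h1 h2])
    then show ?thesis unfolding LinvPi0_def using Lp by (simp add: less_imp_neq[symmetric])
  qed
  define \<beta> where "\<beta> n = cf n - AA * (cf n / L n)" for n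
  have h3: "\<And>y. y \<in> Xd c d \<Longrightarrow> f y - AA * LinvPi0 c d w p q a phi lam f y = (\<Sum>k\<in>F. \<beta> k * PhD (id k) y)"
    unfolding Li h2 \<beta>_def comb_lin by simp
  have e: "(\<lambda>s. PP c d w p q a phi lam s (\<lambda>y. f y - AA * LinvPi0 c d w p q a phi lam f y) x)
     = (\<lambda>s. \<Sum>n\<in>F. \<beta> n * (exp (- s * sqrt (L n)) * PhD (id n) x))"
  proof
    fix s
    show "PP c d w p q a phi lam s (\<lambda>y. f y - AA * LinvPi0 c d w p q a phi lam f y) x
       = (\<Sum>n\<in>F. \<beta> n * (exp (- s * sqrt (L n)) * PhD (id n) x))"
      unfolding PP_def using Pop_combo[OF F h1 h3, of s x] by simp
  qed
  have "(\<Sum>n\<in>F. \<beta> n * ((- sqrt (L n)) * exp (- s * sqrt (L n)) * PhD (id n) x))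
      = (\<Sum>j<d. DD w p q j (UU c d w p q a phi lam s j f) x)" for s
    unfolding sumDU[OF x]
  proof (intro sum.cong refl)
    fix n
    have L: "L n > 0" by (rule Lp)
    have sq: "sqrt (L n) * sqrt (L n) = L n" using L by simp
    have H: "\<beta> n * (- sqrt (L n)) = cf n * (AA - L n) / sqrt (L n)"
      unfolding \<beta>_def using L sq by (simp add: field_simps)
    have "\<beta> n * ((- sqrt (L n)) * exp (- s * sqrt (L n)) * PhD (id n) x)
        = (\<beta> n * (- sqrt (L n))) * (EE s n * PhD n x)" by (simp only: id_apply mult_ac)
    also have "\<dots> = (cf n * (AA - L n) / sqrt (L n)) * (EE s n * PhD n x)" by (simp only: H)
    also have "\<dots> = (if L n \<noteq> 0 then cf n * L n powr (-1/2) * (AA - L n) else 0) * EE s n * PhD n x"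
      using L by (simp add: powr_mhalf')
    finally show "\<beta> n * ((- sqrt (L n)) * exp (- s * sqrt (L n)) * PhD (id n) x) =
      (if L n \<noteq> 0 then cf n * L n powr (-1/2) * (AA - L n) else 0) * EE s n * PhD n x" .
  qed
  then show ?thesis unfolding e using deriv_combo[of \<beta> id x t] by simp
qed

lemma claim_iv_P:
  assumes x: "x \<in> Xd c d"
  shows "((\<lambda>s. PP c d w p q a phi lam s f x) has_real_derivative deriv (\<lambda>s. PP c d w p q a phi lam s f x) t) (at t)
      \<and> (deriv (\<lambda>s. PP c d w p q a phi lam s f x) has_real_derivative
            LLop d w p q AA (PP c d w p q a phi lam t f) x) (at t)"
proof -
  have e: "PP c d w p q a phi lam s f = (\<lambda>y. \<Sum>k\<in>F. cf k * (exp (- s * sqrt (L (id k))) * PhD (id k) y))" for s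
    using fP by auto
  show ?thesis unfolding e using wave[OF F x, of cf id t] by simp
qed

lemma claim_iv_U:
  assumes x: "x \<in> Xd c d" and j: "j < d"
  shows "((\<lambda>s. UU c d w p q a phi lam s j f x) has_real_derivative deriv (\<lambda>s. UU c d w p q a phi lam s j f x) t) (at t)
      \<and> (deriv (\<lambda>s. UU c d w p q a phi lam s j f x) has_real_derivative
            LLop d w p q AA (UU c d w p q a phi lam t j f) x) (at t)"
proof -
  have e: "(\<lambda>s. UU c d w p q a phi lam s j f) = (\<lambda>s y. \<Sum>k\<in>F. bb j k * (exp (- s * sqrt (L (flipj j k))) * PhD (flipj j k) y))"
    using fU[OF j] by (auto simp: L_flip)
  have e2: "UU c d w p q a phi lam s j f = (\<lambda>y. \<Sum>k\<in>F. bb j k * (exp (- s * sqrt (L (flipj j k))) * PhD (flipj j k) y))" for s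
    using fun_cong[OF e, of s] by simp
  show ?thesis unfolding e2 using wave[OF F x, of "bb j" "flipj j" t] by simp
qed

end


theorem mainTheorem8:
  fixes d :: nat and c :: ereal
    and w p q :: "nat \<Rightarrow> real \<Rightarrow> real" and a :: "nat \<Rightarrow> real"
    and phi :: "nat \<Rightarrow> nat \<Rightarrow> real \<Rightarrow> real" and lam :: "nat \<Rightarrow> nat \<Rightarrow> real"
    and f :: "(nat \<Rightarrow> real) \<Rightarrow> real" and A :: real
  assumes d_pos: "d \<ge> 1" and c_pos: "c > 0"
    and w_reg: "\<forall>i<d. C2_on (Xint c) (w i) \<and> (\<forall>x\<in>Xint c. w i x > 0)"
    and p_reg: "\<forall>i<d. C2_on (Xint c) (p i) \<and> (\<forall>x\<in>Xint c. p i x \<noteq> 0)"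
    and q_reg: "\<forall>i<d. C1_on (Xint c) (q i)"
    and a_nonneg: "\<forall>i<d. a i \<ge> 0"
    and A_def: "A = (\<Sum>i<d. a i)"
    and onb: "\<forall>i<d. ONB (mu1 c (w i)) (phi i)"
    and smooth: "\<forall>i<d. \<forall>k. Cinf_on (Xint c) (phi i k)"
    and eigen: "\<forall>i<d. \<forall>k. \<forall>x\<in>Xint c. Lop (w i) (p i) (q i) (a i) (phi i k) x = lam i k * phi i k x"
    and lam_mono: "\<forall>i<d. strict_mono (lam i) \<and> filterlim (lam i) at_top sequentially"
    and delta_L2: "\<forall>i<d. \<forall>k. L2 (mu1 c (w i)) (delta (p i) (q i) (phi i k))"
    and green: "\<forall>i<d. \<forall>k m.
        ip (mu1 c (w i)) (delta (p i) (q i) (phi i k)) (delta (p i) (q i) (phi i m))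
      = ip (mu1 c (w i)) (deltastar (w i) (p i) (q i) (delta (p i) (q i) (phi i k))) (phi i m)"
    and a_lam0: "\<forall>i<d. a i = lam i 0"
    and f_span: "\<exists>F cf. finite F \<and> F \<subseteq> Nd d \<and>
        (\<forall>x\<in>Xd c d. f x = (\<Sum>n\<in>F. cf n * PhiD d p q a phi lam n x))"
  shows
    \<comment> \<open>(i)\<close>
    "(\<forall>t\<ge>0. \<forall>x\<in>Xd c d. \<forall>i<d. \<forall>j<d.
        DD w p q i (UU c d w p q a phi lam t j f) x = DD w p q j (UU c d w p q a phi lam t i f) x)
    \<comment> \<open>(ii)\<close>
     \<and> (\<forall>t>0. \<forall>x\<in>Xd c d. \<forall>j<d.
        ((\<lambda>s. UU c d w p q a phi lam s j f x) has_real_derivative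
            - DD w p q j (PP c d w p q a phi lam t f) x) (at t))
    \<comment> \<open>(iii)\<close>
     \<and> (A = 0 \<longrightarrow> (\<forall>t>0. \<forall>x\<in>Xd c d.
        ((\<lambda>s. PP c d w p q a phi lam s f x) has_real_derivative
            (\<Sum>j<d. DD w p q j (UU c d w p q a phi lam t j f) x)) (at t)))
     \<and> (A > 0 \<longrightarrow> (\<forall>t>0. \<forall>x\<in>Xd c d.
        ((\<lambda>s. PP c d w p q a phi lam s (\<lambda>y. f y - A * LinvPi0 c d w p q a phi lam f y) x)
            has_real_derivative (\<Sum>j<d. DD w p q j (UU c d w p q a phi lam t j f) x)) (at t)))
    \<comment> \<open>(iv)\<close>
     \<and> (\<forall>t>0. \<forall>x\<in>Xd c d.
        ((\<lambda>s. PP c d w p q a phi lam s f x) has_real_derivative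
            deriv (\<lambda>s. PP c d w p q a phi lam s f x) t) (at t)
      \<and> (deriv (\<lambda>s. PP c d w p q a phi lam s f x) has_real_derivative
            LLop d w p q A (PP c d w p q a phi lam t f) x) (at t))
     \<and> (\<forall>t>0. \<forall>x\<in>Xd c d. \<forall>j<d.
        ((\<lambda>s. UU c d w p q a phi lam s j f x) has_real_derivative
            deriv (\<lambda>s. UU c d w p q a phi lam s j f x) t) (at t)
      \<and> (deriv (\<lambda>s. UU c d w p q a phi lam s j f x) has_real_derivative
            LLop d w p q A (UU c d w p q a phi lam t j f) x) (at t))"
proof -
  have oneI: "oneD c (w i) (p i) (q i) (a i) (phi i) (lam i)" if i: "i < d" for i
    by (rule oneD.intro) (use i w_reg p_reg q_reg onb smooth eigen lam_mono delta_L2 green a_lam0 in auto)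
  obtain F cf where FF: "finite F" "F \<subseteq> Nd d" "\<forall>x\<in>Xd c d. f x = (\<Sum>n\<in>F. cf n * PhiD d p q a phi lam n x)"
    using f_span by blast
  interpret M: multiF d c w p q a phi lam F cf f
    by (intro multiF.intro multiD.intro multiF_axioms.intro) (use oneI a_nonneg FF in auto)
  have AA: "A = (\<Sum>i<d. a i)" by (rule A_def)
  show ?thesis
    using M.claim_i M.claim_ii M.claim_iii0 M.claim_iii1 M.claim_iv_P M.claim_iv_U
    unfolding AA by blast
qed

end
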